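(* Let $n\ge3$, $k\ge0$ with $k<n\le 2k$. Let $S\subseteq\mathrm{Inc}(A,B)$ be a maximal independent set of $G_n^k$ which is not reversible and which contains a strict alternating cycle of size $3$ satisfying the Disjoint Property. Then there exist an integer $t\ge1$ and an alternating cycle $C_0$ of size $2t+1$ in $\mathrm{Inc}(A,B)$ satisfying the Matching Conditions such that $S=D(C_0)$.
   Context: For integers $n\ge3$, $k\ge0$, the crown $S_n^k$ is the poset with ground set $A\cup B$, $A=\{a_1,\dots,a_{n+k}\}$, $B=\{b_1,\dots,b_{n+k}\}$, indices cyclic modulo $n+k$; elements of $A$ are pairwise incomparable, as are elements of $B$, and $a_i$ is incomparable to $b_j$ when $j\in\{i,\dots,i+k\}$ (mod $n+k$), while $a_i<b_j$ otherwise. $\mathrm{Inc}(A,B)$ is the set of pairs $(a,b)\in A\times B$ with $a$ incomparable to $b$; $G_n^k$ has vertex set $\mathrm{Inc}(A,B)$ with $(a,b)$ adjacent to $(x,y)$ iff $a<y$ and $x<b$. A set $R\subseteq\mathrm{Inc}(A,B)$ is reversible if some linear extension $L$ of $S_n^k$ has $b<a$ in $L$ for all $(a,b)\in R$. An indexed set $\{(x_\alpha,y_\alpha):\alpha\in[m]\}\subseteq\mathrm{Inc}(A,B)$ is an alternating cycle of size $m$ if $x_\alpha\le y_{\alpha-1}$ for all $\alpha$ (indices cyclic mod $m$); it is strict if $x_\alpha\le y_\beta$ holds iff $\beta=\alpha-1$. Circle conventions: points $u_1,\dots,u_{n+k}$ lie clockwise on a circle and both $a_i$ and $b_i$ are placed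 at $u_i$. For elements $p_1,\dots,p_\ell$, a chain $p_1\,R_1\,p_2\,R_2\cdots p_\ell$ with each $R_j\in\{\prec,\preceq\}$ means that travelling clockwise from the position of $p_1$ until first reaching the position of $p_\ell$ one meets the positions of $p_2,\dots,p_{\ell-1}$ in this order, where $\prec$ requires the two consecutive positions to be distinct and $\preceq$ allows them to coincide. The size of a pair $(v,v')$ with $v$ at $u_i$, $v'$ at $u_j$ is $j-i+1$ modulo $n+k$, taken in $\{1,\dots,n+k\}$. A strict alternating cycle $\{(x_\alpha,y_\alpha):\alpha\in[3]\}$ satisfies the Disjoint Property if $x_1\preceq y_1\prec x_2\preceq y_2\prec x_3\preceq y_3$. An alternating cycle $C_0=\{(x_\alpha,y_\alpha):\alpha\in[2t+1]\}$ (indices mod $2t+1$) satisfies the Matching Conditions if for every $\alpha$: (i) $x_\alpha\preceq y_\alpha\prec x_{\alpha+1}\preceq y_{\alpha+1}$, and (ii) the size of $(x_\alpha,y_{\alpha+t})$ is $k+1$. $D(C_0)$ is the set of all $(x,y)\in\mathrm{Inc}(A,B)$ for which there is $\alpha$ with $x_\alpha\preceq x\preceq y\preceq y_\alpha$. *)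

theory Defs
  imports Main
begin

text \<open>Elements of the crown S_n^k: a_i is Ael i, b_i is Bel i, with indices 0..n+k-1
  (indices are taken cyclically modulo n+k; we use 0-based representatives).\<close>

datatype cel = Ael nat | Bel nat

definition crownA :: "nat \<Rightarrow> nat \<Rightarrow> cel set" where
  "crownA n k = Ael ` {..<n+k}"

definition crownB :: "nat \<Rightarrow> nat \<Rightarrow> cel set" where
  "crownB n k = Bel ` {..<n+k}"

definition crown_elems :: "nat \<Rightarrow> nat \<Rightarrow> cel set" where
  "crown_elems n k = crownA n k \<union> crownB n k"

definition crown_less :: "nat \<Rightarrow> nat \<Rightarrow> cel \<Rightarrow> cel \<Rightarrow> bool" where
  "crown_less n k x y \<longleftrightarrow> (\<exists>i j. x = Ael i \<and> y = Bel j \<and> i < n+k \<and> j < n+k \<and>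
       \<not> (\<exists>d\<le>k. j = (i + d) mod (n+k)))"

definition crown_le :: "nat \<Rightarrow> nat \<Rightarrow> cel \<Rightarrow> cel \<Rightarrow> bool" where
  "crown_le n k x y \<longleftrightarrow> x = y \<or> crown_less n k x y"

definition incomparable :: "nat \<Rightarrow> nat \<Rightarrow> cel \<Rightarrow> cel \<Rightarrow> bool" where
  "incomparable n k x y \<longleftrightarrow> \<not> crown_le n k x y \<and> \<not> crown_le n k y x"

definition Inc :: "nat \<Rightarrow> nat \<Rightarrow> (cel \<times> cel) set" where
  "Inc n k = {(a, b). a \<in> crownA n k \<and> b \<in> crownB n k \<and> incomparable n k a b}"

definition G_adj :: "nat \<Rightarrow> nat \<Rightarrow> cel \<times> cel \<Rightarrow> cel \<times> cel \<Rightarrow> bool" where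
  "G_adj n k p q \<longleftrightarrow> crown_less n k (fst p) (snd q) \<and> crown_less n k (fst q) (snd p)"

definition independent :: "nat \<Rightarrow> nat \<Rightarrow> (cel \<times> cel) set \<Rightarrow> bool" where
  "independent n k S \<longleftrightarrow> S \<subseteq> Inc n k \<and> (\<forall>p\<in>S. \<forall>q\<in>S. \<not> G_adj n k p q)"

definition maximal_independent :: "nat \<Rightarrow> nat \<Rightarrow> (cel \<times> cel) set \<Rightarrow> bool" where
  "maximal_independent n k S \<longleftrightarrow> independent n k S \<and>
     (\<forall>T. independent n k T \<and> S \<subseteq> T \<longrightarrow> T = S)"

definition linear_extension :: "nat \<Rightarrow> nat \<Rightarrow> cel rel \<Rightarrow> bool" where
  "linear_extension n k L \<longleftrightarrow> linear_order_on (crown_elems n k) L \<and>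
     (\<forall>x\<in>crown_elems n k. \<forall>y\<in>crown_elems n k. crown_le n k x y \<longrightarrow> (x, y) \<in> L)"

definition reversible :: "nat \<Rightarrow> nat \<Rightarrow> (cel \<times> cel) set \<Rightarrow> bool" where
  "reversible n k R \<longleftrightarrow> R \<subseteq> Inc n k \<and>
     (\<exists>L. linear_extension n k L \<and> (\<forall>(a, b)\<in>R. (b, a) \<in> L \<and> b \<noteq> a))"

definition alt_cycle :: "nat \<Rightarrow> nat \<Rightarrow> nat \<Rightarrow> (nat \<Rightarrow> cel \<times> cel) \<Rightarrow> bool" where
  "alt_cycle n k m c \<longleftrightarrow> m > 0 \<and> inj_on c {..<m} \<and> c ` {..<m} \<subseteq> Inc n k \<and>
     (\<forall>\<alpha><m. crown_le n k (fst (c \<alpha>)) (snd (c ((\<alpha> + m - 1) mod m))))"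

definition strict_alt_cycle :: "nat \<Rightarrow> nat \<Rightarrow> nat \<Rightarrow> (nat \<Rightarrow> cel \<times> cel) \<Rightarrow> bool" where
  "strict_alt_cycle n k m c \<longleftrightarrow> alt_cycle n k m c \<and>
     (\<forall>\<alpha><m. \<forall>\<beta><m. crown_le n k (fst (c \<alpha>)) (snd (c \<beta>)) \<longleftrightarrow> \<beta> = (\<alpha> + m - 1) mod m)"

text \<open>Circle conventions: a_i and b_i sit at position u_i.\<close>
fun pos :: "cel \<Rightarrow> nat" where
  "pos (Ael i) = i" | "pos (Bel i) = i"

definition cwd :: "nat \<Rightarrow> cel \<Rightarrow> cel \<Rightarrow> nat" where
  "cwd N p q = (pos q + N - pos p) mod N"

text \<open>Chain p_0 R_0 p_1 R_1 ... p_l, with st!j = True meaning R_j is strict (\<prec>) and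
  False meaning \<preceq>. Travelling clockwise from p_0 until first reaching p_l
  (distance cwd in [0,N)), the positions p_1,...,p_{l-1} are met in order.\<close>
definition circ_chain :: "nat \<Rightarrow> cel list \<Rightarrow> bool list \<Rightarrow> bool" where
  "circ_chain N ps st \<longleftrightarrow> ps \<noteq> [] \<and> length st + 1 = length ps \<and>
     (\<forall>j. Suc j < length ps \<longrightarrow>
        cwd N (ps!0) (ps!j) \<le> cwd N (ps!0) (ps!Suc j) \<and>
        (st!j \<longrightarrow> cwd N (ps!0) (ps!j) < cwd N (ps!0) (ps!Suc j)))"

definition pair_size :: "nat \<Rightarrow> cel \<Rightarrow> cel \<Rightarrow> nat" where
  "pair_size N v v' = cwd N v v' + 1"

text \<open>Disjoint Property for a strict alternating cycle of size 3 (indices 0,1,2 for 1,2,3):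
  x1 \<preceq> y1 \<prec> x2 \<preceq> y2 \<prec> x3 \<preceq> y3.\<close>
definition disjoint_property :: "nat \<Rightarrow> nat \<Rightarrow> (nat \<Rightarrow> cel \<times> cel) \<Rightarrow> bool" where
  "disjoint_property n k c \<longleftrightarrow> strict_alt_cycle n k 3 c \<and>
     circ_chain (n+k) [fst (c 0), snd (c 0), fst (c 1), snd (c 1), fst (c 2), snd (c 2)]
                      [False, True, False, True, False]"

definition matching_conditions :: "nat \<Rightarrow> nat \<Rightarrow> nat \<Rightarrow> (nat \<Rightarrow> cel \<times> cel) \<Rightarrow> bool" where
  "matching_conditions n k t c \<longleftrightarrow>
     (\<forall>\<alpha><2*t+1.
        circ_chain (n+k) [fst (c \<alpha>), snd (c \<alpha>), fst (c ((\<alpha>+1) mod (2*t+1))), snd (c ((\<alpha>+1) mod (2*t+1)))]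
                         [False, True, False] \<and>
        pair_size (n+k) (fst (c \<alpha>)) (snd (c ((\<alpha>+t) mod (2*t+1)))) = k + 1)"

definition Dset :: "nat \<Rightarrow> nat \<Rightarrow> nat \<Rightarrow> (nat \<Rightarrow> cel \<times> cel) \<Rightarrow> (cel \<times> cel) set" where
  "Dset n k m c = {(x, y). (x, y) \<in> Inc n k \<and>
     (\<exists>\<alpha><m. circ_chain (n+k) [fst (c \<alpha>), x, y, snd (c \<alpha>)] [False, False, False])}"

end

theory Submission
  imports Defs
begin

declare [[smt_timeout = 300]]

definition dl :: "int \<Rightarrow> int \<Rightarrow> int \<Rightarrow> int" where
  "dl N a b = (if a \<le> b then b - a else N + b - a)"

definition cp :: "int \<Rightarrow> int \<Rightarrow> int \<times> int \<Rightarrow> int \<times> int \<Rightarrow> bool" where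
  "cp N k p q \<longleftrightarrow> dl N (fst p) (snd q) \<le> k \<or> dl N (fst q) (snd p) \<le> k"

lemma step_back:
  fixes N k a d :: int
  assumes "0 \<le> a" "a < N" "0 \<le> d" "d < N" "0 \<le> k" "k < N" "dl N a d \<le> k"
    "dl N (if a = 0 then N - 1 else a - 1) d > k"
  shows "d = (if a + k < N then a + k else a + k - N)"
  using assms unfolding dl_def by (smt (z3))

lemma step_fwd:
  fixes N k b c :: int
  assumes "0 \<le> b" "b < N" "0 \<le> c" "c < N" "0 \<le> k" "k < N" "dl N c b \<le> k"
    "dl N c (if b = N - 1 then 0 else b + 1) > k"
  shows "c = (if k \<le> b then b - k else b + N - k)"
  using assms unfolding dl_def by (smt (z3))

lemma modsub: fixes x y m :: nat assumes "x < m" "y < m"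
  shows "(y + m - x) mod m = (if x \<le> y then y - x else y + m - x)"
proof (cases "x \<le> y")
  case True
  then have e: "y + m - x = (y - x) + m" by simp
  have "((y - x) + m) mod m = (y - x) mod m" by (rule mod_add_self2)
  also have "(y - x) mod m = y - x" using assms by (intro mod_less) arith
  finally show ?thesis using True e by presburger
next
  case False
  then have "y + m - x < m" using assms by arith
  then show ?thesis using False by (simp add: mod_less)
qed

lemma tourn: fixes m t :: nat
  assumes m2: "2 \<le> m"
    and H: "\<And>\<alpha> \<beta>. \<alpha> < m \<Longrightarrow> \<beta> < m \<Longrightarrow> \<alpha> \<noteq> \<beta> \<Longrightarrow> ((\<beta> + m - \<alpha>) mod m \<le> t) \<noteq> ((\<alpha> + m - \<beta>) mod m \<le> t)"
  shows "1 \<le> t \<and> m = 2*t + 1"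
proof -
  have h01: "((1 + m - 0) mod m \<le> t) \<noteq> ((0 + m - 1) mod m \<le> t)"
    by (rule H) (use m2 in simp_all)
  have e1: "(1 + m - 0) mod m = 1" using modsub[of 0 m 1] m2 by simp
  have e2: "(0 + m - 1) mod m = m - 1" using modsub[of 1 m 0] m2 by simp
  have h01': "(1 \<le> t) \<noteq> (m - 1 \<le> t)" using h01 unfolding e1 e2 .
  have t1: "1 \<le> t" using h01' m2 by linarith
  have tm: "t < m" using h01' t1 by linarith
  have "\<not> m \<le> 2*t"
  proof
    assume a: "m \<le> 2*t"
    have h: "((t + m - 0) mod m \<le> t) \<noteq> ((0 + m - t) mod m \<le> t)"
      by (rule H) (use t1 tm in simp_all)
    have f1: "(t + m - 0) mod m = t" using modsub[of 0 m t] tm by simp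
    have f2: "(0 + m - t) mod m = m - t" using modsub[of t m 0] tm t1 by simp
    have "(t \<le> t) \<noteq> (m - t \<le> t)" using h unfolding f1 f2 .
    then show False using a by linarith
  qed
  moreover have "\<not> 2*t + 2 \<le> m"
  proof
    assume a: "2*t + 2 \<le> m"
    have h: "((Suc t + m - 0) mod m \<le> t) \<noteq> ((0 + m - Suc t) mod m \<le> t)"
      by (rule H) (use a in simp_all)
    have f1: "(Suc t + m - 0) mod m = Suc t" using modsub[of 0 m "Suc t"] a by simp
    have f2: "(0 + m - Suc t) mod m = m - Suc t" using modsub[of "Suc t" m 0] a by simp
    have "(Suc t \<le> t) \<noteq> (m - Suc t \<le> t)" using h unfolding f1 f2 .
    then show False using a by linarith
  qed
  ultimately show ?thesis using t1 by linarith
qed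

lemma ar1: "(ra::nat) + tt < m \<Longrightarrow> rb < m \<Longrightarrow> (ra \<le> rb \<and> rb \<le> ra + tt) = ((if ra \<le> rb then rb - ra else rb + m - ra) \<le> tt)"
  by auto
lemma ar2: "m \<le> (ra::nat) + tt \<Longrightarrow> ra < m \<Longrightarrow> rb < m \<Longrightarrow> (ra \<le> rb \<or> rb \<le> ra + tt - m) = ((if ra \<le> rb then rb - ra else rb + m - ra) \<le> tt)"
  by auto

lemma sub_cp:
  fixes N k A B C D a b c d :: int
  assumes "2*k < N" "0 \<le> A" "A \<le> a" "a \<le> b" "b \<le> B" "B < N" "B - A < k"
    "0 \<le> C" "C \<le> c" "c \<le> d" "d \<le> D" "D < N" "D - C < k"
    "(A = C \<and> B = D) \<or> B < C \<or> D < A" "cp N k (A,B) (C,D)"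
  shows "cp N k (a,b) (c,d)"
  using assms unfolding cp_def dl_def fst_conv snd_conv by (smt (z3))

lemma altmod: fixes \<alpha> t :: nat assumes "\<alpha> < 2*t+1" "1 \<le> t"
  shows "((\<alpha> + 2*t) mod (2*t+1) + (2*t+1) - \<alpha>) mod (2*t+1) = 2*t"
proof (cases "\<alpha> = 0")
  case True
  then show ?thesis using modsub[of 0 "2*t+1" "2*t"] by simp
next
  case False
  have e: "\<alpha> + 2*t = (\<alpha> - 1) + (2*t+1)" using False by simp
  have "(\<alpha> + 2*t) mod (2*t+1) = ((\<alpha> - 1) + (2*t+1)) mod (2*t+1)" using e by simp
  also have "\<dots> = (\<alpha> - 1) mod (2*t+1)" by (rule mod_add_self2)
  also have "\<dots> = \<alpha> - 1" using assms by (intro mod_less) arith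
  finally have r: "(\<alpha> + 2*t) mod (2*t+1) = \<alpha> - 1" .
  have "(\<alpha> - 1 + (2*t+1) - \<alpha>) mod (2*t+1) = (if \<alpha> \<le> \<alpha> - 1 then \<alpha> - 1 - \<alpha> else \<alpha> - 1 + (2*t+1) - \<alpha>)"
    using modsub[of \<alpha> "2*t+1" "\<alpha> - 1"] assms by arith
  then show ?thesis unfolding r using False by (simp split: if_split_asm)
qed

locale core =
  fixes N k :: int and T :: "(int \<times> int) set" and a0 b0 a1 b1 a2 b2 :: int
  assumes Nk: "2*k < N" "N \<le> 3*k"
  and T_dom: "\<And>a b. (a,b) \<in> T \<Longrightarrow> 0 \<le> a \<and> a < N \<and> 0 \<le> b \<and> b < N \<and> dl N a b \<le> k"
  and T_ind: "\<And>p q. p \<in> T \<Longrightarrow> q \<in> T \<Longrightarrow> cp N k p q"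
  and T_max: "\<And>a b. 0 \<le> a \<Longrightarrow> a < N \<Longrightarrow> 0 \<le> b \<Longrightarrow> b < N \<Longrightarrow> dl N a b \<le> k
      \<Longrightarrow> (\<forall>q\<in>T. cp N k (a,b) q) \<Longrightarrow> (a,b) \<in> T"
  and P: "(a0,b0) \<in> T" "(a1,b1) \<in> T" "(a2,b2) \<in> T"
  and b1k: "b1 = k"
  and ch: "dl N a0 b0 < dl N a0 a1" "dl N a0 a1 \<le> dl N a0 b1" "dl N a0 b1 < dl N a0 a2" "dl N a0 a2 \<le> dl N a0 b2"
  and s: "dl N a0 b0 \<le> k" "dl N a0 b1 \<le> k" "dl N a0 b2 > k"
         "dl N a1 b1 \<le> k" "dl N a1 b2 \<le> k" "dl N a1 b0 > k"
         "dl N a2 b2 \<le> k" "dl N a2 b0 \<le> k" "dl N a2 b1 > k"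
begin

lemma ord: "0 \<le> a0 \<and> a0 \<le> b0 \<and> b0 + N \<le> a2 + k \<and> a2 + k < b2 + N - k \<and> b2 \<le> a1 + k \<and> a1 \<le> b1
     \<and> b1 \<le> a0 + k \<and> a0 + k < b0 + N - k \<and> a2 \<le> b2 \<and> a1 + k < N"
  using Nk T_dom[OF P(1)] T_dom[OF P(2)] T_dom[OF P(3)] b1k ch s unfolding dl_def by (smt (z3))

definition inM :: "int \<Rightarrow> int \<Rightarrow> bool" where
  "inM a b \<longleftrightarrow> 0 \<le> a \<and> a \<le> b \<and> (b \<le> a2 + k - N \<or> (b2 - k \<le> a \<and> b \<le> a0 + k) \<or> (b0 + N - k \<le> a \<and> b \<le> a1 + k))"

lemma T_inM: assumes "(a,b) \<in> T" shows "inM a b"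
proof -
  have c: "cp N k (a,b) (a0,b0)" "cp N k (a,b) (a1,b1)" "cp N k (a,b) (a2,b2)"
    using T_ind assms P by auto
  show ?thesis using c T_dom[OF assms] ord Nk b1k s unfolding inM_def cp_def dl_def fst_conv snd_conv
    by (smt (z3))
qed

lemma inM_len: "inM a b \<Longrightarrow> b - a < k \<and> b < N"
  using ord Nk b1k unfolding inM_def by linarith

definition contain :: "int \<times> int \<Rightarrow> int \<times> int \<Rightarrow> bool" where
  "contain p q \<longleftrightarrow> fst q \<le> fst p \<and> snd p \<le> snd q"

definition Mx :: "(int \<times> int) set" where
  "Mx = {p \<in> T. \<forall>q\<in>T. contain p q \<longrightarrow> q = p}"

lemma T_sub: "T \<subseteq> {0..<N} \<times> {0..<N}"
  using T_dom by fastforce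

lemma T_fin: "finite T"
  using T_sub finite_subset by blast

lemma container: assumes "p \<in> T" shows "\<exists>q\<in>Mx. contain p q"
proof -
  let ?C = "{q\<in>T. contain p q}"
  have fin: "finite ?C" using T_fin by simp
  have ne: "p \<in> ?C" using assms unfolding contain_def by simp
  let ?L = "Max ((\<lambda>q. snd q - fst q) ` ?C)"
  have "?L \<in> (\<lambda>q. snd q - fst q) ` ?C" using fin ne by (metis (no_types, lifting) Max_in empty_iff finite_imageI image_eqI)
  then obtain q where q: "q \<in> ?C" "snd q - fst q = ?L" by auto
  have "q \<in> Mx"
    unfolding Mx_def
  proof (intro CollectI conjI ballI impI)
    show "q \<in> T" using q by simp
    fix q' assume q': "q' \<in> T" "contain q q'"
    then have "q' \<in> ?C" using q unfolding contain_def by auto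
    then have "snd q' - fst q' \<le> ?L" using fin by (intro Max_ge) auto
    then show "q' = q" using q' q unfolding contain_def by (cases q, cases q') auto
  qed
  then show ?thesis using q by auto
qed

lemma Mx_T: "p \<in> Mx \<Longrightarrow> p \<in> T" unfolding Mx_def by auto

lemma union_cp:
  assumes "inM a b" "inM c d" "inM e f" "c \<le> b" "a \<le> d"
    and "cp N k (a,b) (e,f)" "cp N k (c,d) (e,f)"
  shows "cp N k (min a c, max b d) (e,f)"
  using assms ord Nk b1k unfolding inM_def cp_def dl_def fst_conv snd_conv
  by (smt (z3))

lemma T_cp: "p \<in> T \<Longrightarrow> q \<in> T \<Longrightarrow> cp N k p q" by (rule T_ind)

lemma Mx_disj:
  assumes p: "p \<in> Mx" and q: "q \<in> Mx" and ne: "p \<noteq> q"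
  shows "snd p < fst q \<or> snd q < fst p"
proof (rule ccontr)
  assume ov: "\<not> (snd p < fst q \<or> snd q < fst p)"
  obtain a b where pab: "p = (a,b)" by (cases p)
  obtain c d where qcd: "q = (c,d)" by (cases q)
  have pT: "(a,b) \<in> T" and qT: "(c,d) \<in> T" using p q Mx_T pab qcd by auto
  have iM: "inM a b" "inM c d" using T_inM pT qT by auto
  have ov': "c \<le> b" "a \<le> d" using ov pab qcd by auto
  let ?u = "(min a c, max b d)"
  have uT: "?u \<in> T"
  proof (rule T_max)
    show "0 \<le> min a c" "min a c < N" "0 \<le> max b d" "max b d < N" "dl N (min a c) (max b d) \<le> k"
      using iM ov' ord Nk b1k unfolding inM_def dl_def by (smt (z3))+
    show "\<forall>qa\<in>T. cp N k (min a c, max b d) qa"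
    proof
      fix r assume rT: "r \<in> T"
      obtain e f where ref: "r = (e,f)" by (cases r)
      show "cp N k (min a c, max b d) r"
        using union_cp[OF iM T_inM[of e f] ov'] T_cp[OF pT] T_cp[OF qT] rT ref by auto
    qed
  qed
  have "?u = p" using p uT pab unfolding Mx_def contain_def by auto
  moreover have "?u = q" using q uT qcd unfolding Mx_def contain_def by auto
  ultimately show False using ne by simp
qed

definition sig :: "int \<Rightarrow> int" where "sig a = (if a + k < N then a + k else a + k - N)"
definition tau :: "int \<Rightarrow> int" where "tau b = (if k \<le> b then b - k else b + N - k)"

lemma fwd:
  assumes p: "(a,b) \<in> Mx" shows "\<exists>q\<in>Mx. snd q = sig a"
proof (cases "b - a = k")
  case True
  then show ?thesis using p T_dom[OF Mx_T[OF p]] unfolding sig_def by (intro bexI[of _ "(a,b)"]) auto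
next
  case False
  have pT: "(a,b) \<in> T" using p Mx_T by auto
  have iM: "inM a b" using T_inM pT by auto
  have lt: "b - a < k" using False iM inM_len unfolding inM_def by (smt (z3))
  define a' where "a' = (if a = 0 then N - 1 else a - 1)"
  have nT: "(a',b) \<notin> T"
  proof
    assume h: "(a',b) \<in> T"
    show False
    proof (cases "a = 0")
      case True
      then show ?thesis using T_inM[OF h] lt iM Nk unfolding a'_def inM_def by (smt (z3))
    next
      case False
      then have "contain (a,b) (a',b)" "(a',b) \<noteq> (a,b)" using iM unfolding a'_def contain_def inM_def by auto
      then show ?thesis using p h unfolding Mx_def by auto
    qed
  qed
  have "\<not> (\<forall>q\<in>T. cp N k (a',b) q)"
  proof
    assume "\<forall>q\<in>T. cp N k (a', b) q"
    moreover have "0 \<le> a'" "a' < N" "0 \<le> b" "b < N" "dl N a' b \<le> k"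
      using iM inM_len[OF iM] lt Nk unfolding a'_def inM_def dl_def by (smt (z3))+
    ultimately show False using T_max nT by blast
  qed
  then obtain c d where rT: "(c,d) \<in> T" and ncp: "\<not> cp N k (a',b) (c,d)" by auto
  have cp1: "cp N k (a,b) (c,d)" using T_cp pT rT by auto
  have dlcb: "dl N c b > k" and dla': "dl N a' d > k" using ncp unfolding cp_def by auto
  have dla: "dl N a d \<le> k" using cp1 dlcb unfolding cp_def by auto
  have dsig: "d = sig a" unfolding sig_def
    using step_back[of a N d k] dla dla'[unfolded a'_def] T_dom[OF rT] iM inM_len[OF iM] Nk unfolding inM_def by linarith
  obtain J where J: "J \<in> Mx" "contain (c,d) J" using container rT by blast
  obtain c' d' where Jcd: "J = (c',d')" by (cases J)
  have JT: "(c',d') \<in> T" using J Jcd Mx_T by auto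
  have iMr: "inM c d" using T_inM rT by auto
  have ne: "J \<noteq> (a,b)"
  proof
    assume "J = (a,b)"
    then have "a \<le> c" "d \<le> b" using J Jcd unfolding contain_def by auto
    then show False using ncp iMr iM lt Nk unfolding a'_def cp_def dl_def inM_def fst_conv snd_conv
      by (smt (z3))
  qed
  have dj: "d' < a \<or> b < c'" using Mx_disj[OF J(1) p ne] Jcd by auto
  have cp2: "cp N k (a,b) (c',d')" using T_cp pT JT by auto
  have cJ: "c' \<le> c" "d \<le> d'" using J Jcd unfolding contain_def by auto
  have "d' = d"
    using dj cp2 dlcb dsig cJ iMr iM T_inM[OF JT] lt Nk unfolding sig_def cp_def dl_def inM_def contain_def fst_conv snd_conv
    by (smt (z3))
  then show ?thesis using J Jcd dsig by (intro bexI[of _ J]) auto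
qed

lemma bwd:
  assumes p: "(a,b) \<in> Mx" shows "\<exists>q\<in>Mx. fst q = tau b"
proof (cases "b - a = k")
  case True
  then show ?thesis using p T_dom[OF Mx_T[OF p]] unfolding tau_def by (intro bexI[of _ "(a,b)"]) auto
next
  case False
  have pT: "(a,b) \<in> T" using p Mx_T by auto
  have iM: "inM a b" using T_inM pT by auto
  have lt: "b - a < k" using False iM inM_len unfolding inM_def by (smt (z3))
  define b' where "b' = (if b = N - 1 then 0 else b + 1)"
  have nT: "(a,b') \<notin> T"
  proof
    assume h: "(a,b') \<in> T"
    show False
    proof (cases "b = N - 1")
      case True
      then show ?thesis using T_inM[OF h] lt iM Nk unfolding b'_def inM_def by (smt (z3))
    next
      case False
      then have "contain (a,b) (a,b')" "(a,b') \<noteq> (a,b)" using iM unfolding b'_def contain_def inM_def by auto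
      then show ?thesis using p h unfolding Mx_def by auto
    qed
  qed
  have "\<not> (\<forall>q\<in>T. cp N k (a,b') q)"
  proof
    assume "\<forall>q\<in>T. cp N k (a, b') q"
    moreover have "0 \<le> a" "a < N" "0 \<le> b'" "b' < N" "dl N a b' \<le> k"
      using iM inM_len[OF iM] lt Nk unfolding b'_def inM_def dl_def by (smt (z3))+
    ultimately show False using T_max nT by blast
  qed
  then obtain c d where rT: "(c,d) \<in> T" and ncp: "\<not> cp N k (a,b') (c,d)" by auto
  have cp1: "cp N k (a,b) (c,d)" using T_cp pT rT by auto
  have dlad: "dl N a d > k" and dlb': "dl N c b' > k" using ncp unfolding cp_def by auto
  have dlc: "dl N c b \<le> k" using cp1 dlad unfolding cp_def by auto
  have ctau: "c = tau b" unfolding tau_def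
    using step_fwd[of b N c k] dlc dlb'[unfolded b'_def] T_dom[OF rT] iM inM_len[OF iM] Nk unfolding inM_def by linarith
  obtain J where J: "J \<in> Mx" "contain (c,d) J" using container rT by blast
  obtain c' d' where Jcd: "J = (c',d')" by (cases J)
  have JT: "(c',d') \<in> T" using J Jcd Mx_T by auto
  have iMr: "inM c d" using T_inM rT by auto
  have ne: "J \<noteq> (a,b)"
  proof
    assume "J = (a,b)"
    then have "a \<le> c" "d \<le> b" using J Jcd unfolding contain_def by auto
    then show False using ncp iMr iM lt Nk unfolding b'_def cp_def dl_def inM_def fst_conv snd_conv
      by (smt (z3))
  qed
  have dj: "d' < a \<or> b < c'" using Mx_disj[OF J(1) p ne] Jcd by auto
  have cp2: "cp N k (a,b) (c',d')" using T_cp pT JT by auto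
  have cJ: "c' \<le> c" "d \<le> d'" using J Jcd unfolding contain_def by auto
  have "c' = c"
    using dj cp2 dlad ctau cJ iMr iM T_inM[OF JT] lt Nk unfolding tau_def cp_def dl_def inM_def contain_def fst_conv snd_conv
    by (smt (z3))
  then show ?thesis using J Jcd ctau by (intro bexI[of _ J]) auto
qed

definition St :: "int set" where "St = fst ` Mx"
definition En :: "int set" where "En = snd ` Mx"
definition E :: "int \<Rightarrow> int" where "E a = (THE b. (a,b) \<in> Mx)"
definition Einv :: "int \<Rightarrow> int" where "Einv b = (THE a. (a,b) \<in> Mx)"

lemma Mx_inM: "(a,b) \<in> Mx \<Longrightarrow> inM a b" using T_inM Mx_T by blast

lemma start_uniq: assumes "(a,b) \<in> Mx" "(a,b') \<in> Mx" shows "b = b'"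
proof (rule ccontr)
  assume "b \<noteq> b'"
  then have "b < a \<or> b' < a" using Mx_disj[OF assms] by auto
  then show False using Mx_inM[OF assms(1)] Mx_inM[OF assms(2)] unfolding inM_def by auto
qed

lemma end_uniq: assumes "(a,b) \<in> Mx" "(a',b) \<in> Mx" shows "a = a'"
proof (rule ccontr)
  assume "a \<noteq> a'"
  then have "b < a' \<or> b < a" using Mx_disj[OF assms] by auto
  then show False using Mx_inM[OF assms(1)] Mx_inM[OF assms(2)] unfolding inM_def by auto
qed

lemma E_Mx: assumes "a \<in> St" shows "(a, E a) \<in> Mx"
proof -
  obtain b where b: "(a,b) \<in> Mx" using assms unfolding St_def by force
  have "E a = b" unfolding E_def using b start_uniq by blast
  then show ?thesis using b by simp
qed

lemma E_eq: "(a,b) \<in> Mx \<Longrightarrow> E a = b"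
  unfolding E_def using start_uniq by blast

lemma Einv_Mx: assumes "b \<in> En" shows "(Einv b, b) \<in> Mx"
proof -
  obtain a where a: "(a,b) \<in> Mx" using assms unfolding En_def by force
  have "Einv b = a" unfolding Einv_def using a end_uniq by blast
  then show ?thesis using a by simp
qed

lemma Einv_eq: "(a,b) \<in> Mx \<Longrightarrow> Einv b = a"
  unfolding Einv_def using end_uniq by blast

lemma St_E: "a \<in> St \<Longrightarrow> 0 \<le> a \<and> a \<le> E a \<and> E a < N \<and> E a - a < k"
  using Mx_inM[OF E_Mx] inM_len[OF Mx_inM[OF E_Mx]] unfolding inM_def by auto

lemma ord_E: assumes "a \<in> St" "a' \<in> St" "a < a'" shows "E a < a'"
proof -
  have "(a, E a) \<noteq> (a', E a')" using assms by auto
  then have "E a < a' \<or> E a' < a" using Mx_disj[OF E_Mx[OF assms(1)] E_Mx[OF assms(2)]] by auto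
  then show ?thesis using St_E[OF assms(2)] assms by auto
qed

lemma E_mono: assumes "a \<in> St" "a' \<in> St" shows "(E a < E a') = (a < a')"
proof (cases a a' rule: linorder_cases)
  case less
  then show ?thesis using ord_E[OF assms less] St_E[OF assms(2)] by auto
next
  case equal
  then show ?thesis by simp
next
  case greater
  then show ?thesis using ord_E[OF assms(2,1) greater] St_E[OF assms(1)] by auto
qed

lemma E_inj: "inj_on E St"
  by (smt (verit) E_mono inj_onI)

lemma E_img: "E ` St = En"
proof
  show "E ` St \<subseteq> En" using E_Mx unfolding En_def by force
  show "En \<subseteq> E ` St"
  proof
    fix b assume "b \<in> En"
    then have "(Einv b, b) \<in> Mx" by (rule Einv_Mx)
    then show "b \<in> E ` St" unfolding St_def using E_eq by force
  qed
qed

lemma sig_En: "a \<in> St \<Longrightarrow> sig a \<in> En"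
  using fwd[OF E_Mx] unfolding En_def by force

lemma tau_St: "b \<in> En \<Longrightarrow> tau b \<in> St"
  using bwd[OF Einv_Mx] unfolding St_def by force

lemma En_range: "b \<in> En \<Longrightarrow> 0 \<le> b \<and> b < N"
  using Einv_Mx Mx_inM inM_len unfolding inM_def by fastforce

lemma St_range: "a \<in> St \<Longrightarrow> 0 \<le> a \<and> a < N"
  using St_E by fastforce

lemma sig_tau: "0 \<le> b \<Longrightarrow> b < N \<Longrightarrow> sig (tau b) = b"
  unfolding sig_def tau_def using Nk by auto

lemma sig_inj: "inj_on sig St"
proof (rule inj_onI)
  fix x y assume "x \<in> St" "y \<in> St" "sig x = sig y"
  then show "x = y" using St_range[of x] St_range[of y] Nk unfolding sig_def by (auto split: if_splits)
qed

lemma sig_img: "sig ` St = En"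
proof
  show "sig ` St \<subseteq> En" using sig_En by auto
  show "En \<subseteq> sig ` St"
  proof
    fix b assume b: "b \<in> En"
    then have "sig (tau b) = b" using En_range sig_tau by auto
    then show "b \<in> sig ` St" using tau_St[OF b] by force
  qed
qed

lemma fin_St: "finite St" unfolding St_def Mx_def using T_fin by auto
lemma fin_En: "finite En" unfolding En_def Mx_def using T_fin by auto

definition m :: nat where "m = card St"
definition rank :: "int \<Rightarrow> nat" where "rank a = card {s\<in>St. s < a}"
definition tt :: nat where "tt = card {s\<in>St. N - k \<le> s}"

lemma rank_mono: assumes "a \<in> St" "b \<in> St" "a < b" shows "rank a < rank b"
proof -
  have "{s\<in>St. s < a} \<subset> {s\<in>St. s < b}" using assms by auto
  then show ?thesis unfolding rank_def by (intro psubset_card_mono) (use fin_St in auto)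
qed

lemma rank_le_iff: assumes "a \<in> St" "b \<in> St" shows "(rank a \<le> rank b) = (a \<le> b)"
proof (cases a b rule: linorder_cases)
  case less then show ?thesis using rank_mono[OF assms less] by simp
next
  case equal then show ?thesis by simp
next
  case greater then show ?thesis using rank_mono[OF assms(2,1) greater] by simp
qed

lemma rank_lt: assumes "a \<in> St" shows "rank a < m"
proof -
  have "{s\<in>St. s < a} \<subset> St" using assms by auto
  then show ?thesis unfolding rank_def m_def by (intro psubset_card_mono) (use fin_St in auto)
qed

lemma rank_inj: "inj_on rank St"
  by (rule inj_onI) (metis rank_mono less_irrefl linorder_neqE)

lemma rank_img: "rank ` St = {..<m}"
proof -
  have "rank ` St \<subseteq> {..<m}" using rank_lt by auto
  moreover have "card (rank ` St) = card {..<m}" using card_image[OF rank_inj] m_def by simp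
  ultimately show ?thesis using card_subset_eq[of "{..<m}" "rank ` St"] by simp
qed

definition st :: "nat \<Rightarrow> int" where "st \<alpha> = the_inv_into St rank \<alpha>"

lemma st_St: "\<alpha> < m \<Longrightarrow> st \<alpha> \<in> St"
  unfolding st_def using rank_img rank_inj by (metis lessThan_iff the_inv_into_into order_refl)

lemma rank_st: "\<alpha> < m \<Longrightarrow> rank (st \<alpha>) = \<alpha>"
  unfolding st_def using rank_img rank_inj by (metis f_the_inv_into_f lessThan_iff)

lemma st_rank: "a \<in> St \<Longrightarrow> st (rank a) = a"
  unfolding st_def using rank_inj by (simp add: the_inv_into_f_f)

lemma card_E_lt: "card {s\<in>St. E s < v} = card {e\<in>En. e < v}"
proof -
  have "E ` {s\<in>St. E s < v} = {e\<in>En. e < v}" using E_img by auto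
  moreover have "inj_on E {s\<in>St. E s < v}" using E_inj by (rule inj_on_subset) auto
  ultimately show ?thesis using card_image[of E "{s\<in>St. E s < v}"] by simp
qed

lemma card_sig_lt: "card {s\<in>St. sig s < v} = card {e\<in>En. e < v}"
proof -
  have "sig ` {s\<in>St. sig s < v} = {e\<in>En. e < v}" using sig_img by auto
  moreover have "inj_on sig {s\<in>St. sig s < v}" using sig_inj by (rule inj_on_subset) auto
  ultimately show ?thesis using card_image[of sig "{s\<in>St. sig s < v}"] by simp
qed

definition g :: "int \<Rightarrow> int" where "g a = Einv (sig a)"

lemma g_St: "a \<in> St \<Longrightarrow> g a \<in> St \<and> E (g a) = sig a"
  unfolding g_def using Einv_Mx[OF sig_En] E_eq unfolding St_def by force

lemma rank_g_card: assumes a: "a \<in> St" shows "rank (g a) = card {s\<in>St. sig s < sig a}"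
proof -
  have "rank (g a) = card {s\<in>St. s < g a}" unfolding rank_def by simp
  also have "{s\<in>St. s < g a} = {s\<in>St. E s < E (g a)}" using E_mono[of _ "g a"] g_St[OF a] by auto
  also have "card \<dots> = card {e\<in>En. e < E (g a)}" by (rule card_E_lt)
  also have "\<dots> = card {s\<in>St. sig s < sig a}" using card_sig_lt g_St[OF a] by simp
  finally show ?thesis .
qed

lemma tt_le: "tt \<le> m" unfolding tt_def m_def by (rule card_mono[OF fin_St]) auto

lemma card_low: "card {s\<in>St. s < N - k} + tt = m"
proof -
  have "St = {s\<in>St. s < N - k} \<union> {s\<in>St. N - k \<le> s}" by auto
  moreover have "{s\<in>St. s < N - k} \<inter> {s\<in>St. N - k \<le> s} = {}" by auto
  ultimately show ?thesis unfolding tt_def m_def using fin_St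
    by (metis (no_types, lifting) card_Un_disjoint finite_Un)
qed

lemma rank_g_true: assumes a: "a \<in> St" and True: "a + k < N" shows "rank (g a) = rank a + tt"
proof -
  have "{s\<in>St. sig s < sig a} = {s\<in>St. s < a} \<union> {s\<in>St. N - k \<le> s}"
  proof (rule set_eqI)
    fix x show "(x \<in> {s\<in>St. sig s < sig a}) = (x \<in> {s\<in>St. s < a} \<union> {s\<in>St. N - k \<le> s})"
      using True St_range[of x] St_range[OF a] Nk unfolding sig_def by auto
  qed
  moreover have "{s\<in>St. s < a} \<inter> {s\<in>St. N - k \<le> s} = {}" using True by auto
  ultimately have "card {s\<in>St. sig s < sig a} = rank a + tt" unfolding rank_def tt_def
    using fin_St by (simp add: card_Un_disjoint)
  then show "rank (g a) = rank a + tt" using rank_g_card[OF a] by simp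
qed

lemma rank_g_false: assumes a: "a \<in> St" and False: "\<not> a + k < N"
  shows "rank (g a) = rank a + tt - m \<and> m \<le> rank a + tt"
proof -
  have "{s\<in>St. sig s < sig a} = {s\<in>St. s < a} - {s\<in>St. s < N - k}"
  proof (rule set_eqI)
    fix x show "(x \<in> {s\<in>St. sig s < sig a}) = (x \<in> {s\<in>St. s < a} - {s\<in>St. s < N - k})"
      using False St_range[of x] St_range[OF a] Nk unfolding sig_def by auto
  qed
  moreover have sub: "{s\<in>St. s < N - k} \<subseteq> {s\<in>St. s < a}" using False by auto
  ultimately have "card {s\<in>St. sig s < sig a} = rank a - card {s\<in>St. s < N - k}" unfolding rank_def
    using fin_St by (simp add: card_Diff_subset)
  then have "rank (g a) = rank a - card {s\<in>St. s < N - k}" using rank_g_card[OF a] by simp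
  moreover have "card {s\<in>St. s < N - k} \<le> rank a" unfolding rank_def
    using sub fin_St by (intro card_mono) auto
  ultimately show ?thesis using card_low by auto
qed

lemma rank_g: assumes a: "a \<in> St" shows "rank (g a) = (rank a + tt) mod m"
proof (cases "a + k < N")
  case True
  then have "rank (g a) = rank a + tt" by (rule rank_g_true[OF a])
  moreover have "rank (g a) < m" using rank_lt g_St[OF a] by auto
  ultimately show ?thesis by simp
next
  case False
  then have h: "rank (g a) = rank a + tt - m" "m \<le> rank a + tt" using rank_g_false[OF a] by auto
  moreover have "rank (g a) < m" using rank_lt g_St[OF a] by auto
  moreover have "(rank a + tt) mod m = (rank a + tt - m) mod m" using le_mod_geq[OF h(2)] .
  ultimately show ?thesis by simp
qed

lemma le_Eb: assumes "a \<in> St" "b \<in> St" shows "(a \<le> E b) = (a \<le> b)"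
  using ord_E[OF assms(2,1)] St_E[OF assms(2)] by (cases "b < a") auto

lemma winB: assumes a: "a \<in> St" and b: "b \<in> St"
  shows "(dl N a (E b) \<le> k) = ((rank b + m - rank a) mod m \<le> tt)"
proof -
  have gS: "g a \<in> St" and Eg: "E (g a) = sig a" using g_St[OF a] by auto
  have rg: "rank (g a) = (rank a + tt) mod m" using rank_g[OF a] .
  have ra: "rank a < m" and rb: "rank b < m" using rank_lt a b by auto
  have ms: "(rank b + m - rank a) mod m = (if rank a \<le> rank b then rank b - rank a else rank b + m - rank a)"
    using modsub ra rb by blast
  have ab: "(rank a \<le> rank b) = (a \<le> b)" using rank_le_iff a b by blast
  have bg: "(rank b \<le> rank (g a)) = (b \<le> g a)" using rank_le_iff b gS by blast
  have Ebg: "(E b \<le> E (g a)) = (b \<le> g a)" using E_mono[OF gS b] by (metis not_less)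
  have aEb: "(a \<le> E b) = (a \<le> b)" using le_Eb a b by blast
  have rEb: "0 \<le> E b \<and> E b < N" using St_E[OF b] St_range[OF b] by auto
  have ra0: "0 \<le> a \<and> a < N" using St_range[OF a] .
  show ?thesis
  proof (cases "a + k < N")
    case True
    then have sa: "sig a = a + k" unfolding sig_def by simp
    have rg': "rank (g a) = rank a + tt" using rank_g_true[OF a True] .
    then have "rank a + tt < m" using rank_lt[OF gS] by simp
    have "(dl N a (E b) \<le> k) = (a \<le> E b \<and> E b \<le> a + k)"
      using rEb ra0 True Nk unfolding dl_def by auto
    also have "\<dots> = (a \<le> b \<and> b \<le> g a)" using aEb Ebg Eg sa by simp
    also have "\<dots> = (rank a \<le> rank b \<and> rank b \<le> rank a + tt)" using ab bg rg' by simp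
    also have "\<dots> = ((rank b + m - rank a) mod m \<le> tt)" unfolding ms by (rule ar1[OF \<open>rank a + tt < m\<close> rb])
    finally show ?thesis .
  next
    case False
    then have sa: "sig a = a + k - N" unfolding sig_def by simp
    have rg': "rank (g a) = rank a + tt - m" and "m \<le> rank a + tt" using rank_g_false[OF a False] by auto
    have "(dl N a (E b) \<le> k) = (a \<le> E b \<or> E b \<le> a + k - N)"
      using rEb ra0 False Nk unfolding dl_def by auto
    also have "\<dots> = (a \<le> b \<or> b \<le> g a)" using aEb Ebg Eg sa by simp
    also have "\<dots> = (rank a \<le> rank b \<or> rank b \<le> rank a + tt - m)" using ab bg rg' by simp
    also have "\<dots> = ((rank b + m - rank a) mod m \<le> tt)" unfolding ms by (rule ar2[OF \<open>m \<le> rank a + tt\<close> ra rb])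
    finally show ?thesis .
  qed
qed

lemma notboth: assumes a: "a \<in> St" and b: "b \<in> St" and ne: "a \<noteq> b"
  shows "\<not> (dl N a (E b) \<le> k \<and> dl N b (E a) \<le> k)"
proof -
  have "(a, E a) \<noteq> (b, E b)" using ne by simp
  then have dj: "E a < b \<or> E b < a" using Mx_disj[OF E_Mx[OF a] E_Mx[OF b]] by simp
  show ?thesis using dj St_E[OF a] St_E[OF b] Nk unfolding dl_def by (smt (z3))
qed

lemma some: assumes a: "a \<in> St" and b: "b \<in> St"
  shows "dl N a (E b) \<le> k \<or> dl N b (E a) \<le> k"
  using T_ind[OF Mx_T[OF E_Mx[OF a]] Mx_T[OF E_Mx[OF b]]] unfolding cp_def by auto

lemma m2: "2 \<le> m"
proof -
  obtain J0 where J0: "J0 \<in> Mx" "contain (a0,b0) J0" using container P(1) by blast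
  obtain J1 where J1: "J1 \<in> Mx" "contain (a1,b1) J1" using container P(2) by blast
  obtain c0 d0 where J0e: "J0 = (c0,d0)" by (cases J0)
  obtain c1 d1 where J1e: "J1 = (c1,d1)" by (cases J1)
  have i0: "inM c0 d0" using Mx_inM J0 J0e by simp
  have ct0: "c0 \<le> a0" "b0 \<le> d0" using J0(2) J0e unfolding contain_def by auto
  have ct1: "c1 \<le> a1" "b1 \<le> d1" using J1(2) J1e unfolding contain_def by auto
  have ne: "c0 \<noteq> c1"
  proof
    assume h: "c0 = c1"
    then have "d0 = d1" using start_uniq J0 J1 J0e J1e by auto
    have "c0 \<le> a0" "a0 \<le> b0" "b0 + N \<le> a2 + k" "a2 + k < b2 + N - k" "b2 \<le> a1 + k" "a1 \<le> k" "k \<le> d0"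
      using ct0 ct1 ord b1k \<open>d0 = d1\<close> by auto
    moreover have "d0 \<le> a2 + k - N \<or> (b2 - k \<le> c0 \<and> d0 \<le> a0 + k) \<or> (b0 + N - k \<le> c0 \<and> d0 \<le> a1 + k)"
      using i0 unfolding inM_def by auto
    ultimately show False using Nk by linarith
  qed
  moreover have "c0 \<in> St" "c1 \<in> St" using J0 J1 J0e J1e unfolding St_def by force+
  ultimately have "card {c0, c1} \<le> m" unfolding m_def using fin_St by (intro card_mono) auto
  then show ?thesis using ne by simp
qed

lemma m_eq: "1 \<le> tt \<and> m = 2*tt + 1"
proof (rule tourn[OF m2])
  fix \<alpha> \<beta> assume h: "\<alpha> < m" "\<beta> < m" "\<alpha> \<noteq> \<beta>"
  let ?a = "st \<alpha>" and ?b = "st \<beta>"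
  have S: "?a \<in> St" "?b \<in> St" using st_St h by auto
  have r: "rank ?a = \<alpha>" "rank ?b = \<beta>" using rank_st h by auto
  have ne: "?a \<noteq> ?b" using r h by metis
  have w1: "(dl N ?a (E ?b) \<le> k) = ((\<beta> + m - \<alpha>) mod m \<le> tt)" using winB[OF S(1) S(2)] r by simp
  have w2: "(dl N ?b (E ?a) \<le> k) = ((\<alpha> + m - \<beta>) mod m \<le> tt)" using winB[OF S(2) S(1)] r by simp
  show "((\<beta> + m - \<alpha>) mod m \<le> tt) \<noteq> ((\<alpha> + m - \<beta>) mod m \<le> tt)"
    using notboth[OF S ne] some[OF S] unfolding w1 w2 by blast
qed

lemma st_mono: assumes "\<alpha> < \<beta>" "\<beta> < m" shows "st \<alpha> < st \<beta>"
proof (rule ccontr)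
  assume "\<not> st \<alpha> < st \<beta>"
  then have "st \<beta> \<le> st \<alpha>" by simp
  then have "rank (st \<beta>) \<le> rank (st \<alpha>)" using rank_le_iff st_St assms by simp
  then show False using rank_st assms by simp
qed

lemma core_main: "\<exists>(t::nat) f. 1 \<le> t \<and> (\<forall>\<alpha><2*t+1. f \<alpha> \<in> T \<and> fst (f \<alpha>) \<le> snd (f \<alpha>))
   \<and> (\<forall>\<alpha> \<beta>. \<alpha> < \<beta> \<longrightarrow> \<beta> < 2*t+1 \<longrightarrow> snd (f \<alpha>) < fst (f \<beta>))
   \<and> (\<forall>\<alpha><2*t+1. dl N (fst (f \<alpha>)) (snd (f ((\<alpha>+t) mod (2*t+1)))) = k)
   \<and> (\<forall>\<alpha><2*t+1. k < dl N (fst (f \<alpha>)) (snd (f ((\<alpha>+2*t) mod (2*t+1)))))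
   \<and> T = {(a,b). \<exists>\<alpha><2*t+1. fst (f \<alpha>) \<le> a \<and> a \<le> b \<and> b \<le> snd (f \<alpha>)}"
proof (rule exI[of _ tt], rule exI[of _ "\<lambda>\<alpha>. (st \<alpha>, E (st \<alpha>))"], intro conjI)
  let ?f = "\<lambda>\<alpha>. (st \<alpha>, E (st \<alpha>))"
  have mm: "m = 2*tt+1" and t1: "1 \<le> tt" using m_eq by auto
  show "1 \<le> tt" by (rule t1)
  show "\<forall>\<alpha><2*tt+1. ?f \<alpha> \<in> T \<and> fst (?f \<alpha>) \<le> snd (?f \<alpha>)"
    using Mx_T E_Mx st_St St_E mm by auto
  show "\<forall>\<alpha> \<beta>. \<alpha> < \<beta> \<longrightarrow> \<beta> < 2*tt+1 \<longrightarrow> snd (?f \<alpha>) < fst (?f \<beta>)"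
  proof (intro allI impI)
    fix \<alpha> \<beta> :: nat assume h: "\<alpha> < \<beta>" "\<beta> < 2*tt+1"
    then have "st \<alpha> < st \<beta>" using st_mono mm by simp
    then show "snd (?f \<alpha>) < fst (?f \<beta>)" using ord_E st_St h mm by simp
  qed
  show "\<forall>\<alpha><2*tt+1. dl N (fst (?f \<alpha>)) (snd (?f ((\<alpha>+tt) mod (2*tt+1)))) = k"
  proof (intro allI impI)
    fix \<alpha> :: nat assume h: "\<alpha> < 2*tt+1"
    let ?a = "st \<alpha>"
    have aS: "?a \<in> St" using st_St h mm by simp
    have "rank (g ?a) = (\<alpha> + tt) mod m" using rank_g[OF aS] rank_st h mm by simp
    then have "st ((\<alpha> + tt) mod m) = g ?a" using st_rank g_St[OF aS] by metis
    then have "E (st ((\<alpha> + tt) mod m)) = sig ?a" using g_St[OF aS] by simp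
    moreover have "dl N ?a (sig ?a) = k" using St_range[OF aS] Nk unfolding sig_def dl_def by auto
    ultimately show "dl N (fst (?f \<alpha>)) (snd (?f ((\<alpha>+tt) mod (2*tt+1)))) = k" using mm by simp
  qed
  show "\<forall>\<alpha><2*tt+1. k < dl N (fst (?f \<alpha>)) (snd (?f ((\<alpha>+2*tt) mod (2*tt+1))))"
  proof (intro allI impI)
    fix \<alpha> :: nat assume h: "\<alpha> < 2*tt+1"
    let ?a = "st \<alpha>" and ?b = "st ((\<alpha>+2*tt) mod (2*tt+1))"
    have aS: "?a \<in> St" using st_St h mm by simp
    have bS: "?b \<in> St" using st_St mm by simp
    have rb: "rank ?b = (\<alpha>+2*tt) mod (2*tt+1)" using rank_st mm by simp
    have ra: "rank ?a = \<alpha>" using rank_st h mm by simp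
    have "(dl N ?a (E ?b) \<le> k) = (((\<alpha>+2*tt) mod (2*tt+1) + (2*tt+1) - \<alpha>) mod (2*tt+1) \<le> tt)"
      using winB[OF aS bS] unfolding rb ra mm .
    also have "\<dots> = (2*tt \<le> tt)" using altmod[OF h t1] by simp
    finally show "k < dl N (fst (?f \<alpha>)) (snd (?f ((\<alpha>+2*tt) mod (2*tt+1))))" using t1 by simp
  qed
  show "T = {(a,b). \<exists>\<alpha><2*tt+1. fst (?f \<alpha>) \<le> a \<and> a \<le> b \<and> b \<le> snd (?f \<alpha>)}"
  proof
    show "T \<subseteq> {(a,b). \<exists>\<alpha><2*tt+1. fst (?f \<alpha>) \<le> a \<and> a \<le> b \<and> b \<le> snd (?f \<alpha>)}"
    proof
      fix p assume pT: "p \<in> T"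
      obtain a b where pab: "p = (a,b)" by (cases p)
      obtain J where J: "J \<in> Mx" "contain p J" using container pT by blast
      obtain c d where Jcd: "J = (c,d)" by (cases J)
      have cS: "c \<in> St" using J Jcd unfolding St_def by force
      have Ec: "E c = d" using E_eq J Jcd by simp
      have "st (rank c) = c" using st_rank cS by simp
      moreover have "rank c < 2*tt+1" using rank_lt cS mm by simp
      moreover have "a \<le> b" using T_inM pT pab unfolding inM_def by simp
      ultimately show "p \<in> {(a,b). \<exists>\<alpha><2*tt+1. fst (?f \<alpha>) \<le> a \<and> a \<le> b \<and> b \<le> snd (?f \<alpha>)}"
        using J(2) Jcd pab Ec unfolding contain_def by force
    qed
    show "{(a,b). \<exists>\<alpha><2*tt+1. fst (?f \<alpha>) \<le> a \<and> a \<le> b \<and> b \<le> snd (?f \<alpha>)} \<subseteq> T"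
    proof
      fix p assume "p \<in> {(a,b). \<exists>\<alpha><2*tt+1. fst (?f \<alpha>) \<le> a \<and> a \<le> b \<and> b \<le> snd (?f \<alpha>)}"
      then obtain a b \<alpha> where pab: "p = (a,b)" and h: "\<alpha> < 2*tt+1" "st \<alpha> \<le> a" "a \<le> b" "b \<le> E (st \<alpha>)"
        by auto
      let ?A = "st \<alpha>"
      have AS: "?A \<in> St" using st_St h mm by simp
      have rA: "0 \<le> ?A \<and> ?A \<le> E ?A \<and> E ?A < N \<and> E ?A - ?A < k" using St_E[OF AS] .
      have "(a,b) \<in> T"
      proof (rule T_max)
        show "0 \<le> a" "a < N" "0 \<le> b" "b < N" "dl N a b \<le> k" using rA h unfolding dl_def by auto
        show "\<forall>q\<in>T. cp N k (a, b) q"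
        proof
          fix q assume qT: "q \<in> T"
          obtain c d where qcd: "q = (c,d)" by (cases q)
          obtain J where J: "J \<in> Mx" "contain q J" using container qT by blast
          obtain C D where JCD: "J = (C,D)" by (cases J)
          have CS: "C \<in> St" using J JCD unfolding St_def by force
          have EC: "E C = D" using E_eq J JCD by simp
          have rC: "0 \<le> C \<and> C \<le> D \<and> D < N \<and> D - C < k" using St_E[OF CS] EC by simp
          have ct: "C \<le> c" "d \<le> D" using J(2) JCD qcd unfolding contain_def by auto
          have cd: "c \<le> d" using T_inM qT qcd unfolding inM_def by simp
          have cpb: "cp N k (?A, E ?A) (C, D)"
            using T_ind[OF Mx_T[OF E_Mx[OF AS]] Mx_T[OF J(1)]] JCD by simp
          have dj: "(?A = C \<and> E ?A = D) \<or> E ?A < C \<or> D < ?A"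
          proof (cases "?A = C")
            case True then show ?thesis using EC by simp
          next
            case False
            then have "(?A, E ?A) \<noteq> (C, D)" by simp
            then show ?thesis using Mx_disj[OF E_Mx[OF AS] J(1)[unfolded JCD]] by simp
          qed
          show "cp N k (a,b) q" unfolding qcd
            by (rule sub_cp[of k N ?A a b "E ?A" C c d D]) (use Nk rA h rC ct cd dj cpb in auto)
        qed
      qed
      then show "p \<in> T" using pab by simp
    qed
  qed
qed

end


lemma cw_eq: "a < N \<Longrightarrow> b < N \<Longrightarrow> (b + N - a) mod (N::nat) = (if a \<le> b then b - a else b + N - a)"
proof (cases "a \<le> b")
  case True
  assume "a < N" "b < N"
  then have e: "b + N - a = (b - a) + N" using True by simp
  have "(b + N - a) mod N = ((b - a) + N) mod N" by (simp only: e)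
  also have "\<dots> = (b - a) mod N" by (rule mod_add_self2)
  also have "\<dots> = b - a" using \<open>b < N\<close> by (intro mod_less) arith
  finally have X: "(b + N - a) mod N = b - a" .
  show ?thesis by (subst if_P[OF True]) (rule X)
next
  case False
  assume "a < N" "b < N"
  then have "b + N - a < N" using False by arith
  then show ?thesis using False by simp
qed

lemma cwd_dl:
  assumes "x < N" "y < N" "z < (N::nat)"
  shows "int ((y + N - x) mod N) = dl (int N) (int ((x + N - z) mod N)) (int ((y + N - z) mod N))"
  using assms unfolding cw_eq[OF assms(3) assms(1)] cw_eq[OF assms(3) assms(2)] cw_eq[OF assms(1) assms(2)] dl_def
  by (auto split: if_splits)

lemma inv_coord: assumes "w < N" "z < (N::nat)" shows "(z + (w + N - z) mod N) mod N = w"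
proof (cases "z \<le> w")
  case True
  then have "(w + N - z) mod N = w - z" using cw_eq[OF assms(2,1)] by simp
  then show ?thesis using True assms by simp
next
  case False
  then have "(w + N - z) mod N = w + N - z" using cw_eq[OF assms(2,1)] by simp
  moreover have "z + (w + N - z) = w + N" using False assms by arith
  ultimately show ?thesis using assms by simp
qed

lemma coord_inv: assumes "c < N" "z < (N::nat)" shows "((z + c) mod N + N - z) mod N = c"
proof (cases "z + c < N")
  case True
  then have "(z + c) mod N = z + c" by simp
  then show ?thesis using cw_eq[of z N "z + c"] True assms by simp
next
  case False
  then have e: "(z + c) mod N = z + c - N" using assms by (simp add: mod_if)
  then have "(z + c) mod N < N" using assms by simp
  then show ?thesis using cw_eq[of z N "(z + c) mod N"] e False assms by auto
qed

lemma ex_le_mod: assumes "i < N" "j < N" "k < (N::nat)"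
  shows "(\<exists>d\<le>k. j = (i + d) mod N) \<longleftrightarrow> (j + N - i) mod N \<le> k"
proof
  assume "\<exists>d\<le>k. j = (i + d) mod N"
  then obtain d where d: "d \<le> k" "j = (i + d) mod N" by auto
  have "(j + N - i) mod N = d"
  proof (cases "i + d < N")
    case True
    then have "j = i + d" using d by simp
    then show ?thesis using cw_eq[of i N j] assms by simp
  next
    case False
    then have jv: "j = i + d - N" using d assms by (simp add: mod_if)
    then have jl: "\<not> i \<le> j" using d assms False by arith
    then have "(j + N - i) mod N = j + N - i" using cw_eq[of i N j] assms by simp
    also have "\<dots> = d" using jv False by arith
    finally show ?thesis .
  qed
  then show "(j + N - i) mod N \<le> k" using d by simp
next
  assume h: "(j + N - i) mod N \<le> k"
  have "(i + (j + N - i) mod N) mod N = j" using inv_coord[of j N i] assms by simp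
  then show "\<exists>d\<le>k. j = (i + d) mod N" using h by (intro exI[of _ "(j + N - i) mod N"]) auto
qed



lemma cc_get: "circ_chain N ps st \<Longrightarrow> Suc j < length ps \<Longrightarrow>
   cwd N (ps!0) (ps!j) \<le> cwd N (ps!0) (ps!Suc j) \<and> (st!j \<longrightarrow> cwd N (ps!0) (ps!j) < cwd N (ps!0) (ps!Suc j))"
  unfolding circ_chain_def by blast

lemma cc4: "circ_chain N [p0,p1,p2,p3] [s0,s1,s2] \<longleftrightarrow>
   (cwd N p0 p0 \<le> cwd N p0 p1 \<and> (s0 \<longrightarrow> cwd N p0 p0 < cwd N p0 p1)) \<and>
   (cwd N p0 p1 \<le> cwd N p0 p2 \<and> (s1 \<longrightarrow> cwd N p0 p1 < cwd N p0 p2)) \<and>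
   (cwd N p0 p2 \<le> cwd N p0 p3 \<and> (s2 \<longrightarrow> cwd N p0 p2 < cwd N p0 p3))"
proof
  assume h: "circ_chain N [p0,p1,p2,p3] [s0,s1,s2]"
  show "(cwd N p0 p0 \<le> cwd N p0 p1 \<and> (s0 \<longrightarrow> cwd N p0 p0 < cwd N p0 p1)) \<and>
   (cwd N p0 p1 \<le> cwd N p0 p2 \<and> (s1 \<longrightarrow> cwd N p0 p1 < cwd N p0 p2)) \<and>
   (cwd N p0 p2 \<le> cwd N p0 p3 \<and> (s2 \<longrightarrow> cwd N p0 p2 < cwd N p0 p3))"
    using cc_get[OF h, of 0] cc_get[OF h, of 1] cc_get[OF h, of 2] by simp
next
  assume h: "(cwd N p0 p0 \<le> cwd N p0 p1 \<and> (s0 \<longrightarrow> cwd N p0 p0 < cwd N p0 p1)) \<and>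
   (cwd N p0 p1 \<le> cwd N p0 p2 \<and> (s1 \<longrightarrow> cwd N p0 p1 < cwd N p0 p2)) \<and>
   (cwd N p0 p2 \<le> cwd N p0 p3 \<and> (s2 \<longrightarrow> cwd N p0 p2 < cwd N p0 p3))"
  show "circ_chain N [p0,p1,p2,p3] [s0,s1,s2]"
    unfolding circ_chain_def
  proof (intro conjI allI impI)
    fix j assume j: "Suc j < length [p0,p1,p2,p3]"
    then have "j = 0 \<or> j = 1 \<or> j = 2" by auto
    then show "cwd N ([p0,p1,p2,p3] ! 0) ([p0,p1,p2,p3] ! j) \<le> cwd N ([p0,p1,p2,p3] ! 0) ([p0,p1,p2,p3] ! Suc j)"
      using h by auto
    fix j assume j: "Suc j < length [p0,p1,p2,p3]" "[s0,s1,s2] ! j"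
    then have "j = 0 \<or> j = 1 \<or> j = 2" by auto
    then show "cwd N ([p0,p1,p2,p3] ! 0) ([p0,p1,p2,p3] ! j) < cwd N ([p0,p1,p2,p3] ! 0) ([p0,p1,p2,p3] ! Suc j)"
      using h j by auto
  qed auto
qed

lemma dp6: assumes "circ_chain N [q0,q1,q2,q3,q4,q5] [False,True,False,True,False]"
  shows "cwd N q0 q1 < cwd N q0 q2" "cwd N q0 q2 \<le> cwd N q0 q3" "cwd N q0 q3 < cwd N q0 q4" "cwd N q0 q4 \<le> cwd N q0 q5"
  using cc_get[OF assms, of 1] cc_get[OF assms, of 2] cc_get[OF assms, of 3] cc_get[OF assms, of 4]
  by (simp_all add: numeral_eq_Suc)


lemma crown_less_AB: assumes "i < n+k" "j < n+k" "0 < n"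
  shows "crown_less n k (Ael i) (Bel j) \<longleftrightarrow> k < (j + (n+k) - i) mod (n+k)"
  unfolding crown_less_def using ex_le_mod[of i "n+k" j k] assms by auto

lemma crown_less_Ael: "crown_less n k (Ael i) y \<Longrightarrow> i < n + k"
  unfolding crown_less_def by auto

lemma crown_le_AB: assumes "i < n+k" "j < n+k" "0 < n"
  shows "crown_le n k (Ael i) (Bel j) \<longleftrightarrow> k < (j + (n+k) - i) mod (n+k)"
  unfolding crown_le_def using crown_less_AB[OF assms] by simp

lemma crown_le_BA: "\<not> crown_le n k (Bel j) (Ael i)"
  unfolding crown_le_def crown_less_def by simp

lemma inc_char: assumes "0 < n"
  shows "(a,b) \<in> Inc n k \<longleftrightarrow> (\<exists>i j. a = Ael i \<and> b = Bel j \<and> i < n+k \<and> j < n+k \<and> (j + (n+k) - i) mod (n+k) \<le> k)"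
proof
  assume "(a,b) \<in> Inc n k"
  then obtain i j where ij: "a = Ael i" "b = Bel j" "i < n+k" "j < n+k" "incomparable n k a b"
    unfolding Inc_def crownA_def crownB_def by auto
  then show "\<exists>i j. a = Ael i \<and> b = Bel j \<and> i < n+k \<and> j < n+k \<and> (j + (n+k) - i) mod (n+k) \<le> k"
    using crown_le_AB[OF ij(3,4) assms] unfolding incomparable_def by auto
next
  assume "\<exists>i j. a = Ael i \<and> b = Bel j \<and> i < n+k \<and> j < n+k \<and> (j + (n+k) - i) mod (n+k) \<le> k"
  then obtain i j where ij: "a = Ael i" "b = Bel j" "i < n+k" "j < n+k" "(j + (n+k) - i) mod (n+k) \<le> k" by auto
  then show "(a,b) \<in> Inc n k"
    using crown_le_AB[OF ij(3,4) assms] crown_le_BA unfolding Inc_def crownA_def crownB_def incomparable_def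
    by auto
qed

lemma inc_pos: assumes "p \<in> Inc n k" "0 < n"
  shows "fst p = Ael (pos (fst p)) \<and> snd p = Bel (pos (snd p)) \<and> pos (fst p) < n+k \<and> pos (snd p) < n+k
     \<and> cwd (n+k) (fst p) (snd p) \<le> k"
proof -
  obtain a b where p: "p = (a,b)" by (cases p)
  then obtain i j where "a = Ael i \<and> b = Bel j \<and> i < n+k \<and> j < n+k \<and> (j + (n+k) - i) mod (n+k) \<le> k"
    using inc_char[OF assms(2)] assms(1) by auto
  then show ?thesis using p unfolding cwd_def by auto
qed

lemma inc_crown_le: assumes "p \<in> Inc n k" "q \<in> Inc n k" "0 < n"
  shows "crown_le n k (fst p) (snd q) \<longleftrightarrow> k < cwd (n+k) (fst p) (snd q)"
proof -
  have P: "fst p = Ael (pos (fst p))" "pos (fst p) < n+k" using inc_pos[OF assms(1,3)] by auto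
  have Q: "snd q = Bel (pos (snd q))" "pos (snd q) < n+k" using inc_pos[OF assms(2,3)] by auto
  have "crown_le n k (Ael (pos (fst p))) (Bel (pos (snd q))) \<longleftrightarrow> k < (pos (snd q) + (n+k) - pos (fst p)) mod (n+k)"
    by (rule crown_le_AB[OF P(2) Q(2) assms(3)])
  then show ?thesis unfolding cwd_def using P Q by simp
qed

lemma inc_crown_less: assumes "p \<in> Inc n k" "q \<in> Inc n k" "0 < n"
  shows "crown_less n k (fst p) (snd q) \<longleftrightarrow> k < cwd (n+k) (fst p) (snd q)"
proof -
  have P: "fst p = Ael (pos (fst p))" "pos (fst p) < n+k" using inc_pos[OF assms(1,3)] by auto
  have Q: "snd q = Bel (pos (snd q))" "pos (snd q) < n+k" using inc_pos[OF assms(2,3)] by auto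
  have "crown_less n k (Ael (pos (fst p))) (Bel (pos (snd q))) \<longleftrightarrow> k < (pos (snd q) + (n+k) - pos (fst p)) mod (n+k)"
    by (rule crown_less_AB[OF P(2) Q(2) assms(3)])
  then show ?thesis unfolding cwd_def using P Q by simp
qed

lemma inc_adj: assumes "p \<in> Inc n k" "q \<in> Inc n k" "0 < n"
  shows "G_adj n k p q \<longleftrightarrow> k < cwd (n+k) (fst p) (snd q) \<and> k < cwd (n+k) (fst q) (snd p)"
  unfolding G_adj_def using inc_crown_less assms by blast



lemma mc1: fixes N A B C D :: int
  shows "0 \<le> A \<Longrightarrow> A \<le> B \<Longrightarrow> B < C \<Longrightarrow> C \<le> D \<Longrightarrow> D < N \<Longrightarrow> dl N A B < dl N A C \<and> dl N A C \<le> dl N A D"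
  unfolding dl_def by auto

lemma mc2: fixes N A B C D :: int
  shows "0 \<le> C \<Longrightarrow> C \<le> D \<Longrightarrow> D < A \<Longrightarrow> A \<le> B \<Longrightarrow> B < N \<Longrightarrow> dl N A B < dl N A C \<and> dl N A C \<le> dl N A D"
  unfolding dl_def by auto

lemma dsub: fixes N A B a b :: int
  assumes "0 \<le> A" "A \<le> B" "B < N" "0 \<le> a" "a < N" "0 \<le> b" "b < N"
  shows "(dl N A a \<le> dl N A b \<and> dl N A b \<le> dl N A B) \<longleftrightarrow> (A \<le> a \<and> a \<le> b \<and> b \<le> B)"
  using assms unfolding dl_def by auto

lemma cwd_self: "cwd N x x = 0" unfolding cwd_def by simp

theorem theorem5p7:
  fixes n k :: nat and S :: "(cel \<times> cel) set"
  assumes "n \<ge> 3" and "k < n" and "n \<le> 2 * k"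
    and "maximal_independent n k S"
    and "\<not> reversible n k S"
    and "\<exists>c. strict_alt_cycle n k 3 c \<and> c ` {..<3} \<subseteq> S \<and> disjoint_property n k c"
  shows "\<exists>t c0. t \<ge> 1 \<and> alt_cycle n k (2 * t + 1) c0 \<and> matching_conditions n k t c0
            \<and> S = Dset n k (2 * t + 1) c0"
proof -
  define N where "N = n + k"
  have n0: "0 < n" using assms(1) by simp
  have kN: "k < N" using n0 N_def by simp
  have N2: "2*k < N" "N \<le> 3*k" using assms(2,3) N_def by auto
  obtain c where sc: "strict_alt_cycle n k 3 c" and cS: "c ` {..<3} \<subseteq> S" and dp: "disjoint_property n k c"
    using assms(6) by blast
  have ind: "independent n k S" and maxi: "\<And>T. independent n k T \<Longrightarrow> S \<subseteq> T \<Longrightarrow> T = S"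
    using assms(4) unfolding maximal_independent_def by auto
  have SI: "S \<subseteq> Inc n k" using ind unfolding independent_def by auto
  have noadj: "\<And>p q. p \<in> S \<Longrightarrow> q \<in> S \<Longrightarrow> \<not> G_adj n k p q" using ind unfolding independent_def by auto
  have c012: "c 0 \<in> S" "c 1 \<in> S" "c 2 \<in> S" using cS by auto
  have posInc: "\<And>p. p \<in> Inc n k \<Longrightarrow> fst p = Ael (pos (fst p)) \<and> snd p = Bel (pos (snd p)) \<and> pos (fst p) < N \<and> pos (snd p) < N
     \<and> cwd N (fst p) (snd p) \<le> k"
    using inc_pos[OF _ n0] unfolding N_def by blast
  define z where "z = (pos (snd (c 1)) + N - k) mod N"
  have zN: "z < N" unfolding z_def using kN by simp
  define U where "U w = (w + N - z) mod N" for w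
  have UN: "\<And>w. U w < N" unfolding U_def using kN by simp
  have cwdU: "\<And>x y. pos x < N \<Longrightarrow> pos y < N \<Longrightarrow> int (cwd N x y) = dl (int N) (int (U (pos x))) (int (U (pos y)))"
    unfolding U_def cwd_def using cwd_dl zN by blast
  define \<phi> where "\<phi> p = (int (U (pos (fst p))), int (U (pos (snd p))))" for p :: "cel \<times> cel"
  define T where "T = \<phi> ` S"
  define \<psi> where "\<psi> q = (Ael ((z + nat (fst q)) mod N), Bel ((z + nat (snd q)) mod N))" for q :: "int \<times> int"
  have psiphi: "\<And>p. p \<in> Inc n k \<Longrightarrow> \<psi> (\<phi> p) = p"
  proof -
    fix p assume p: "p \<in> Inc n k"
    have h: "fst p = Ael (pos (fst p))" "snd p = Bel (pos (snd p))" "pos (fst p) < N" "pos (snd p) < N"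
      using posInc[OF p] by auto
    show "\<psi> (\<phi> p) = p" unfolding \<psi>_def \<phi>_def U_def
      using inv_coord[OF h(3) zN] inv_coord[OF h(4) zN] h by (simp add: prod_eq_iff)
  qed
  have phipsi: "\<And>a b. 0 \<le> a \<Longrightarrow> a < int N \<Longrightarrow> 0 \<le> b \<Longrightarrow> b < int N \<Longrightarrow> \<phi> (\<psi> (a,b)) = (a,b)"
  proof -
    fix a b :: int assume h: "0 \<le> a" "a < int N" "0 \<le> b" "b < int N"
    have "nat a < N" "nat b < N" using h by auto
    then show "\<phi> (\<psi> (a,b)) = (a,b)" unfolding \<psi>_def \<phi>_def U_def
      using coord_inv[of "nat a" N z] coord_inv[of "nat b" N z] zN h by simp
  qed
  have cwdphi: "\<And>p q. p \<in> Inc n k \<Longrightarrow> q \<in> Inc n k \<Longrightarrow> int (cwd N (fst p) (snd q)) = dl (int N) (fst (\<phi> p)) (snd (\<phi> q))"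
    unfolding \<phi>_def using cwdU posInc by simp
  have adj: "\<And>p q. p \<in> Inc n k \<Longrightarrow> q \<in> Inc n k \<Longrightarrow> G_adj n k p q \<longleftrightarrow>
      int k < dl (int N) (fst (\<phi> p)) (snd (\<phi> q)) \<and> int k < dl (int N) (fst (\<phi> q)) (snd (\<phi> p))"
  proof -
    fix p q assume pq: "p \<in> Inc n k" "q \<in> Inc n k"
    show "G_adj n k p q \<longleftrightarrow> int k < dl (int N) (fst (\<phi> p)) (snd (\<phi> q)) \<and> int k < dl (int N) (fst (\<phi> q)) (snd (\<phi> p))"
      using inc_adj[OF pq n0] cwdphi[OF pq] cwdphi[OF pq(2,1)] unfolding N_def[symmetric] by linarith
  qed
  have crle: "\<And>p q. p \<in> Inc n k \<Longrightarrow> q \<in> Inc n k \<Longrightarrow> crown_le n k (fst p) (snd q) \<longleftrightarrow>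
      int k < dl (int N) (fst (\<phi> p)) (snd (\<phi> q))"
  proof -
    fix p q assume pq: "p \<in> Inc n k" "q \<in> Inc n k"
    show "crown_le n k (fst p) (snd q) \<longleftrightarrow> int k < dl (int N) (fst (\<phi> p)) (snd (\<phi> q))"
      using inc_crown_le[OF pq n0] cwdphi[OF pq] unfolding N_def[symmetric] by linarith
  qed
  have phiR: "\<And>p. 0 \<le> fst (\<phi> p) \<and> fst (\<phi> p) < int N \<and> 0 \<le> snd (\<phi> p) \<and> snd (\<phi> p) < int N"
    unfolding \<phi>_def using UN by auto
  have cI: "\<And>i. i < 3 \<Longrightarrow> c i \<in> Inc n k" using cS SI by auto
  let ?a = "\<lambda>i. fst (\<phi> (c i))" and ?b = "\<lambda>i. snd (\<phi> (c i))"
  have scf: "\<And>\<alpha> \<beta>. \<alpha> < 3 \<Longrightarrow> \<beta> < 3 \<Longrightarrow> (int k < dl (int N) (?a \<alpha>) (?b \<beta>)) \<longleftrightarrow> \<beta> = (\<alpha> + 2) mod 3"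
  proof -
    fix \<alpha> \<beta> :: nat assume h: "\<alpha> < 3" "\<beta> < 3"
    have "crown_le n k (fst (c \<alpha>)) (snd (c \<beta>)) \<longleftrightarrow> \<beta> = (\<alpha> + 3 - 1) mod 3"
      using sc h unfolding strict_alt_cycle_def by blast
    then show "(int k < dl (int N) (?a \<alpha>) (?b \<beta>)) \<longleftrightarrow> \<beta> = (\<alpha> + 2) mod 3"
      using crle[OF cI[OF h(1)] cI[OF h(2)]] by simp
  qed
  have cc6: "circ_chain N [fst (c 0), snd (c 0), fst (c 1), snd (c 1), fst (c 2), snd (c 2)] [False, True, False, True, False]"
    using dp unfolding disjoint_property_def N_def by blast
  have posc: "\<And>i. i < 3 \<Longrightarrow> pos (fst (c i)) < N \<and> pos (snd (c i)) < N" using posInc cI by blast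
  have cwdc: "\<And>x y. pos x < N \<Longrightarrow> pos y < N \<Longrightarrow> int (cwd N x y) = dl (int N) (int (U (pos x))) (int (U (pos y)))"
    by (rule cwdU)
  note d6 = dp6[OF cc6]
  have ch: "dl (int N) (?a 0) (?b 0) < dl (int N) (?a 0) (?a 1)" "dl (int N) (?a 0) (?a 1) \<le> dl (int N) (?a 0) (?b 1)"
     "dl (int N) (?a 0) (?b 1) < dl (int N) (?a 0) (?a 2)" "dl (int N) (?a 0) (?a 2) \<le> dl (int N) (?a 0) (?b 2)"
  proof -
    have p0: "pos (fst (c 0)) < N" "pos (snd (c 0)) < N" using posc[of 0] by auto
    have p1: "pos (fst (c 1)) < N" "pos (snd (c 1)) < N" using posc[of 1] by auto
    have p2: "pos (fst (c 2)) < N" "pos (snd (c 2)) < N" using posc[of 2] by auto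
    show "dl (int N) (?a 0) (?b 0) < dl (int N) (?a 0) (?a 1)" "dl (int N) (?a 0) (?a 1) \<le> dl (int N) (?a 0) (?b 1)"
     "dl (int N) (?a 0) (?b 1) < dl (int N) (?a 0) (?a 2)" "dl (int N) (?a 0) (?a 2) \<le> dl (int N) (?a 0) (?b 2)"
      using d6 cwdc[OF p0(1) p0(2)] cwdc[OF p0(1) p1(1)] cwdc[OF p0(1) p1(2)] cwdc[OF p0(1) p2(1)] cwdc[OF p0(1) p2(2)]
      unfolding \<phi>_def by simp_all
  qed
  have b1k: "?b 1 = int k"
  proof -
    let ?w = "pos (snd (c 1))"
    have wN: "?w < N" using posc[of 1] by simp
    have zz: "z = (if k \<le> ?w then ?w - k else ?w + N - k)" unfolding z_def using cw_eq[OF kN wN] .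
    have "U ?w = k"
    proof (cases "k \<le> ?w")
      case True
      then have "?w + N - z = k + N" using zz by simp
      then show ?thesis unfolding U_def using kN by simp
    next
      case False
      then have "z = ?w + N - k" using zz by simp
      then have "?w + N - z = k" using wN kN by arith
      then show ?thesis unfolding U_def using kN by simp
    qed
    then show ?thesis unfolding \<phi>_def by simp
  qed
  have core: "core (int N) (int k) T (?a 0) (?b 0) (?a 1) (?b 1) (?a 2) (?b 2)"
  proof (unfold_locales)
    show "2 * int k < int N" "int N \<le> 3 * int k" using N2 by auto
    show "\<And>a b. (a, b) \<in> T \<Longrightarrow> 0 \<le> a \<and> a < int N \<and> 0 \<le> b \<and> b < int N \<and> dl (int N) a b \<le> int k"
    proof -
      fix a b assume "(a,b) \<in> T"
      then obtain p where p: "p \<in> S" "(a,b) = \<phi> p" unfolding T_def by auto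
      have "int (cwd N (fst p) (snd p)) \<le> int k" using posInc SI p by auto
      then show "0 \<le> a \<and> a < int N \<and> 0 \<le> b \<and> b < int N \<and> dl (int N) a b \<le> int k"
        using cwdphi[of p p] SI p phiR[of p] by (metis fst_conv snd_conv subsetD)
    qed
    show "\<And>p q. p \<in> T \<Longrightarrow> q \<in> T \<Longrightarrow> cp (int N) (int k) p q"
    proof -
      fix p' q' assume "p' \<in> T" "q' \<in> T"
      then obtain p q where pq: "p \<in> S" "q \<in> S" "p' = \<phi> p" "q' = \<phi> q" unfolding T_def by auto
      have "\<not> G_adj n k p q" using noadj pq by auto
      moreover have "p \<in> Inc n k" "q \<in> Inc n k" using pq SI by auto
      ultimately show "cp (int N) (int k) p' q'" unfolding cp_def using adj[of p q] pq by auto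
    qed
    show "\<And>a b. 0 \<le> a \<Longrightarrow> a < int N \<Longrightarrow> 0 \<le> b \<Longrightarrow> b < int N \<Longrightarrow> dl (int N) a b \<le> int k
      \<Longrightarrow> \<forall>q\<in>T. cp (int N) (int k) (a, b) q \<Longrightarrow> (a, b) \<in> T"
    proof -
      fix a b :: int
      assume h: "0 \<le> a" "a < int N" "0 \<le> b" "b < int N" "dl (int N) a b \<le> int k"
        and cpa: "\<forall>q\<in>T. cp (int N) (int k) (a, b) q"
      let ?r = "\<psi> (a,b)"
      have ppr: "\<phi> ?r = (a,b)" using phipsi h by simp
      have rpos: "pos (fst ?r) < N" "pos (snd ?r) < N" unfolding \<psi>_def using kN by auto
      have "int (cwd N (fst ?r) (snd ?r)) = dl (int N) a b" using cwdU[OF rpos] ppr unfolding \<phi>_def by simp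
      then have "cwd N (fst ?r) (snd ?r) \<le> k" using h by linarith
      then have rI: "?r \<in> Inc n k" unfolding \<psi>_def using inc_char[OF n0] rpos unfolding cwd_def N_def \<psi>_def
        by auto
      have "independent n k (insert ?r S)"
        unfolding independent_def
      proof (intro conjI ballI)
        show "insert ?r S \<subseteq> Inc n k" using rI SI by auto
        fix p q assume pq: "p \<in> insert ?r S" "q \<in> insert ?r S"
        have pI: "p \<in> Inc n k" and qI: "q \<in> Inc n k" using pq rI SI by auto
        show "\<not> G_adj n k p q"
        proof (cases "p \<in> S \<and> q \<in> S")
          case True then show ?thesis using noadj by auto
        next
          case False
          then have "p = ?r \<or> q = ?r" using pq by auto
          then show ?thesis
          proof
            assume pr: "p = ?r"
            show ?thesis
            proof (cases "q \<in> S")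
              case True
              then have "cp (int N) (int k) (a,b) (\<phi> q)" using cpa unfolding T_def by auto
              then show ?thesis using adj[OF pI qI] pr ppr unfolding cp_def by auto
            next
              case False
              then have "q = ?r" using pq by auto
              then show ?thesis using adj[OF pI qI] pr ppr h by auto
            qed
          next
            assume qr: "q = ?r"
            show ?thesis
            proof (cases "p \<in> S")
              case True
              then have "cp (int N) (int k) (a,b) (\<phi> p)" using cpa unfolding T_def by auto
              then show ?thesis using adj[OF pI qI] qr ppr unfolding cp_def by auto
            next
              case False
              then have "p = ?r" using pq by auto
              then show ?thesis using adj[OF pI qI] qr ppr h by auto
            qed
          qed
        qed
      qed
      then have "insert ?r S = S" using maxi by auto
      then have "?r \<in> S" by auto
      then show "(a,b) \<in> T" unfolding T_def using ppr by force
    qed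
    show "(?a 0, ?b 0) \<in> T" "(?a 1, ?b 1) \<in> T" "(?a 2, ?b 2) \<in> T" unfolding T_def using c012 by force+
    show "?b 1 = int k" by (rule b1k)
    show "dl (int N) (?a 0) (?b 0) < dl (int N) (?a 0) (?a 1)" "dl (int N) (?a 0) (?a 1) \<le> dl (int N) (?a 0) (?b 1)"
     "dl (int N) (?a 0) (?b 1) < dl (int N) (?a 0) (?a 2)" "dl (int N) (?a 0) (?a 2) \<le> dl (int N) (?a 0) (?b 2)"
      by (rule ch)+
    show "dl (int N) (?a 0) (?b 0) \<le> int k" "dl (int N) (?a 0) (?b 1) \<le> int k" "int k < dl (int N) (?a 0) (?b 2)"
      "dl (int N) (?a 1) (?b 1) \<le> int k" "dl (int N) (?a 1) (?b 2) \<le> int k" "int k < dl (int N) (?a 1) (?b 0)"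
      "dl (int N) (?a 2) (?b 2) \<le> int k" "dl (int N) (?a 2) (?b 0) \<le> int k" "int k < dl (int N) (?a 2) (?b 1)"
      using scf[of 0 0] scf[of 0 1] scf[of 0 2] scf[of 1 0] scf[of 1 1] scf[of 1 2] scf[of 2 0] scf[of 2 1] scf[of 2 2]
      by simp_all
  qed

  obtain t :: nat and f :: "nat \<Rightarrow> int \<times> int" where t1: "1 \<le> t" and fT: "\<forall>\<alpha><2*t+1. f \<alpha> \<in> T \<and> fst (f \<alpha>) \<le> snd (f \<alpha>)"
    and ford: "\<forall>\<alpha> \<beta>. \<alpha> < \<beta> \<longrightarrow> \<beta> < 2*t+1 \<longrightarrow> snd (f \<alpha>) < fst (f \<beta>)"
    and fk: "\<forall>\<alpha><2*t+1. dl (int N) (fst (f \<alpha>)) (snd (f ((\<alpha>+t) mod (2*t+1)))) = int k"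
    and falt: "\<forall>\<alpha><2*t+1. int k < dl (int N) (fst (f \<alpha>)) (snd (f ((\<alpha>+2*t) mod (2*t+1))))"
    and Teq: "T = {(a,b). \<exists>\<alpha><2*t+1. fst (f \<alpha>) \<le> a \<and> a \<le> b \<and> b \<le> snd (f \<alpha>)}"
    using core.core_main[OF core] by blast
  define c0 where "c0 \<alpha> = \<psi> (f \<alpha>)" for \<alpha>
  have c0S: "\<And>\<alpha>. \<alpha> < 2*t+1 \<Longrightarrow> c0 \<alpha> \<in> S \<and> \<phi> (c0 \<alpha>) = f \<alpha>"
  proof -
    fix \<alpha> assume h: "\<alpha> < 2*t+1"
    obtain p where p: "p \<in> S" "f \<alpha> = \<phi> p" using fT h unfolding T_def by auto
    have "p \<in> Inc n k" using p SI by auto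
    then have "c0 \<alpha> = p" unfolding c0_def using p(2) psiphi by simp
    then show "c0 \<alpha> \<in> S \<and> \<phi> (c0 \<alpha>) = f \<alpha>" using p by simp
  qed
  have c0I: "\<And>\<alpha>. \<alpha> < 2*t+1 \<Longrightarrow> c0 \<alpha> \<in> Inc n k" using c0S SI by auto
  have c0pos: "\<And>\<alpha>. \<alpha> < 2*t+1 \<Longrightarrow> pos (fst (c0 \<alpha>)) < N \<and> pos (snd (c0 \<alpha>)) < N" using posInc c0I by blast
  have fa: "\<And>\<alpha>. \<alpha> < 2*t+1 \<Longrightarrow> int (U (pos (fst (c0 \<alpha>)))) = fst (f \<alpha>) \<and> int (U (pos (snd (c0 \<alpha>)))) = snd (f \<alpha>)"
    using c0S unfolding \<phi>_def by (metis fst_conv snd_conv)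
  have fR: "\<And>\<alpha>. \<alpha> < 2*t+1 \<Longrightarrow> 0 \<le> fst (f \<alpha>) \<and> fst (f \<alpha>) \<le> snd (f \<alpha>) \<and> snd (f \<alpha>) < int N"
    using phiR c0S fT by metis
  have mt: "(2*t+1) - 1 = 2*t" by simp
  show ?thesis
  proof (intro exI conjI)
    show "1 \<le> t" by (rule t1)
    show "alt_cycle n k (2*t+1) c0"
      unfolding alt_cycle_def
    proof (intro conjI)
      show "0 < 2*t+1" by simp
      show "inj_on c0 {..<2*t+1}"
      proof (rule inj_onI)
        fix \<alpha> \<beta> assume h: "\<alpha> \<in> {..<2*t+1}" "\<beta> \<in> {..<2*t+1}" "c0 \<alpha> = c0 \<beta>"
        then have e: "f \<alpha> = f \<beta>" using c0S by (metis lessThan_iff)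
        show "\<alpha> = \<beta>"
        proof (rule ccontr)
          assume "\<alpha> \<noteq> \<beta>"
          then have "\<alpha> < \<beta> \<or> \<beta> < \<alpha>" by auto
          then show False using ford fR h e by (metis lessThan_iff not_less)
        qed
      qed
      show "c0 ` {..<2*t+1} \<subseteq> Inc n k" using c0I by auto
      show "\<forall>\<alpha><2*t+1. crown_le n k (fst (c0 \<alpha>)) (snd (c0 ((\<alpha> + (2*t+1) - 1) mod (2*t+1))))"
      proof (intro allI impI)
        fix \<alpha> assume h: "\<alpha> < 2*t+1"
        let ?\<beta> = "(\<alpha> + 2*t) mod (2*t+1)"
        have hb: "?\<beta> < 2*t+1" by simp
        have "crown_le n k (fst (c0 \<alpha>)) (snd (c0 ?\<beta>))"
          using crle[OF c0I[OF h] c0I[OF hb]] c0S[OF h] c0S[OF hb] falt h by simp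
        moreover have "\<alpha> + (2*t+1) - 1 = \<alpha> + 2*t" by simp
        ultimately show "crown_le n k (fst (c0 \<alpha>)) (snd (c0 ((\<alpha> + (2*t+1) - 1) mod (2*t+1))))" by simp
      qed
    qed
    show "matching_conditions n k t c0"
      unfolding matching_conditions_def N_def[symmetric]
    proof (intro allI impI conjI)
      fix \<alpha> assume h: "\<alpha> < 2*t+1"
      let ?\<beta> = "(\<alpha> + 1) mod (2*t+1)"
      have hb: "?\<beta> < 2*t+1" by simp
      have w1: "int (cwd N (fst (c0 \<alpha>)) (snd (c0 \<alpha>))) = dl (int N) (fst (f \<alpha>)) (snd (f \<alpha>))"
        using cwdU c0pos[OF h] fa[OF h] by metis
      have w2: "int (cwd N (fst (c0 \<alpha>)) (fst (c0 ?\<beta>))) = dl (int N) (fst (f \<alpha>)) (fst (f ?\<beta>))"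
        using cwdU c0pos[OF h] c0pos[OF hb] fa[OF h] fa[OF hb] by metis
      have w3: "int (cwd N (fst (c0 \<alpha>)) (snd (c0 ?\<beta>))) = dl (int N) (fst (f \<alpha>)) (snd (f ?\<beta>))"
        using cwdU c0pos[OF h] c0pos[OF hb] fa[OF h] fa[OF hb] by metis
      have ineq: "dl (int N) (fst (f \<alpha>)) (snd (f \<alpha>)) < dl (int N) (fst (f \<alpha>)) (fst (f ?\<beta>)) \<and>
                  dl (int N) (fst (f \<alpha>)) (fst (f ?\<beta>)) \<le> dl (int N) (fst (f \<alpha>)) (snd (f ?\<beta>))"
      proof (cases "\<alpha> + 1 < 2*t+1")
        case True
        then have b: "?\<beta> = \<alpha> + 1" by simp
        have "snd (f \<alpha>) < fst (f (\<alpha>+1))" using ford True by simp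
        then show ?thesis unfolding b using mc1 fR[OF h] fR[OF True] by blast
      next
        case False
        then have a: "\<alpha> = 2*t" using h by simp
        then have b: "?\<beta> = 0" by simp
        have "snd (f 0) < fst (f \<alpha>)" using ford a t1 by simp
        then show ?thesis unfolding b by (rule mc2[rotated 2]) (use fR[OF h] fR[of 0] in auto)
      qed
      show "circ_chain N [fst (c0 \<alpha>), snd (c0 \<alpha>), fst (c0 ?\<beta>), snd (c0 ?\<beta>)] [False, True, False]"
        unfolding cc4 cwd_self using ineq unfolding w1[symmetric] w2[symmetric] w3[symmetric] by simp
      let ?g = "(\<alpha> + t) mod (2*t+1)"
      have hg: "?g < 2*t+1" by simp
      have "int (cwd N (fst (c0 \<alpha>)) (snd (c0 ?g))) = int k"
        using cwdU c0pos[OF h] c0pos[OF hg] fa[OF h] fa[OF hg] fk h by metis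
      then show "pair_size N (fst (c0 \<alpha>)) (snd (c0 ?g)) = k + 1" unfolding pair_size_def by simp
    qed
    show "S = Dset n k (2*t+1) c0"
    proof (rule set_eqI)
      fix p
      show "p \<in> S \<longleftrightarrow> p \<in> Dset n k (2*t+1) c0"
      proof (cases "p \<in> Inc n k")
        case False
        then show ?thesis using SI unfolding Dset_def by auto
      next
        case True
        have pp: "pos (fst p) < N" "pos (snd p) < N" using posInc True by auto
        have chi: "\<And>\<alpha>. \<alpha> < 2*t+1 \<Longrightarrow> circ_chain N [fst (c0 \<alpha>), fst p, snd p, snd (c0 \<alpha>)] [False, False, False]
            \<longleftrightarrow> (fst (f \<alpha>) \<le> fst (\<phi> p) \<and> fst (\<phi> p) \<le> snd (\<phi> p) \<and> snd (\<phi> p) \<le> snd (f \<alpha>))"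
        proof -
          fix \<alpha> assume h: "\<alpha> < 2*t+1"
          have v1: "int (cwd N (fst (c0 \<alpha>)) (fst p)) = dl (int N) (fst (f \<alpha>)) (fst (\<phi> p))"
            using cwdU[of "fst (c0 \<alpha>)" "fst p"] c0pos[OF h] pp fa[OF h] unfolding \<phi>_def by simp
          have v2: "int (cwd N (fst (c0 \<alpha>)) (snd p)) = dl (int N) (fst (f \<alpha>)) (snd (\<phi> p))"
            using cwdU[of "fst (c0 \<alpha>)" "snd p"] c0pos[OF h] pp fa[OF h] unfolding \<phi>_def by simp
          have v3: "int (cwd N (fst (c0 \<alpha>)) (snd (c0 \<alpha>))) = dl (int N) (fst (f \<alpha>)) (snd (f \<alpha>))"
            using cwdU c0pos[OF h] fa[OF h] by metis
          have "circ_chain N [fst (c0 \<alpha>), fst p, snd p, snd (c0 \<alpha>)] [False, False, False]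
             \<longleftrightarrow> (dl (int N) (fst (f \<alpha>)) (fst (\<phi> p)) \<le> dl (int N) (fst (f \<alpha>)) (snd (\<phi> p)) \<and>
                  dl (int N) (fst (f \<alpha>)) (snd (\<phi> p)) \<le> dl (int N) (fst (f \<alpha>)) (snd (f \<alpha>)))"
            unfolding cc4 cwd_self by (simp add: v1[symmetric] v2[symmetric] v3[symmetric])
          also have "\<dots> \<longleftrightarrow> (fst (f \<alpha>) \<le> fst (\<phi> p) \<and> fst (\<phi> p) \<le> snd (\<phi> p) \<and> snd (\<phi> p) \<le> snd (f \<alpha>))"
            using dsub fR[OF h] phiR[of p] by blast
          finally show "circ_chain N [fst (c0 \<alpha>), fst p, snd p, snd (c0 \<alpha>)] [False, False, False]
            \<longleftrightarrow> (fst (f \<alpha>) \<le> fst (\<phi> p) \<and> fst (\<phi> p) \<le> snd (\<phi> p) \<and> snd (\<phi> p) \<le> snd (f \<alpha>))" .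
        qed
        have "p \<in> Dset n k (2*t+1) c0 \<longleftrightarrow> (\<exists>\<alpha><2*t+1. circ_chain N [fst (c0 \<alpha>), fst p, snd p, snd (c0 \<alpha>)] [False, False, False])"
          unfolding Dset_def N_def using True by (cases p) auto
        also have "\<dots> \<longleftrightarrow> \<phi> p \<in> T" unfolding Teq using chi by (cases "\<phi> p") auto
        also have "\<dots> \<longleftrightarrow> p \<in> S"
        proof
          assume "\<phi> p \<in> T"
          then obtain q where q: "q \<in> S" "\<phi> q = \<phi> p" unfolding T_def by auto
          then have "q = p" using psiphi SI True by (metis subsetD)
          then show "p \<in> S" using q by simp
        qed (simp add: T_def)
        finally show ?thesis by simp
      qed
    qed
  qed
qed
end
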